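(* Let $\mathcal{F}=(\mu_n,\mathcal{S}_n,L_n,\pi_n)_{n\ge1}$ be a family of irreducible, reversible continuous-time finite Markov chains with $\pi_n(|\mu_n/\pi_n|^2)\to\infty$. The following are equivalent: (1) $\mathcal{F}$ has an $L^2$-cutoff; (2) for all $\epsilon>0$ and $c>0$, $T_{n,2}(\mu_n,\epsilon)\lambda_{n,j_n(c)}\to\infty$; (3) there is $\epsilon>0$ such that $T_{n,2}(\mu_n,\epsilon)\lambda_{n,j_n(c)}\to\infty$ for all $c>0$; (4) for all $c>0$, $\tau_n(c)\lambda_{n,j_n(c)}\to\infty$; (5) for all $\tilde c>0$, $c>0$, $\tau_n(\tilde c)\lambda_{n,j_n(c)}\to\infty$; (6) there is $\tilde c>0$ with $\tau_n(\tilde c)\lambda_{n,j_n(c)}\to\infty$ for all $c>0$. Moreover, if $\mathcal{F}$ has an $L^2$-cutoff, then $\tau_n(c)$ is an $L^2$-cutoff time for every $c>0$, and \[|T_{n,2}(\mu_n,\epsilon)-T_{n,2}(\mu_n,\delta)|=O(1/\lambda_{n,j_n(c)})\ \ \forall\epsilon,\delta,c>0,\qquad |T_{n,2}(\mu_n,\epsilon)-\tau_n(c)|=O\big(\sqrt{\tau_n(c)/\lambda_{n,j_n(c)}}\big)\ \ \forall\epsilon,c>0.\]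
   Context: For the $n$th chain, $H_{n,t}=e^{tL_n}$, $d_{n,2}(\mu_n,t)=\big(\sum_y|\mu_nH_{n,t}(y)/\pi_n(y)-1|^2\pi_n(y)\big)^{1/2}$, $T_{n,2}(\mu_n,\epsilon)=\min\{t\ge0:d_{n,2}(\mu_n,t)\le\epsilon\}$, and $\pi_n(|\mu_n/\pi_n|^2)=\sum_y\mu_n(y)^2/\pi_n(y)$. Let $0=\lambda_{n,0}<\lambda_{n,1}\le\dots\le\lambda_{n,|\mathcal{S}_n|-1}$ be the eigenvalues of $-L_n$ with $L^2(\pi_n)$-orthonormal right eigenvectors $\phi_{n,0}=\mathbf 1,\phi_{n,1},\dots$; $\mu_n(\phi)=\sum_x\mu_n(x)\phi(x)$. For $c>0$: $j_n(c)=\min\{j\ge1:\sum_{i=1}^j|\mu_n(\phi_{n,i})|^2>c\}$ and $\tau_n(c)=\max_{j\ge j_n(c)}\frac{\log(1+\sum_{i=1}^j|\mu_n(\phi_{n,i})|^2)}{2\lambda_{n,j}}$. $L^2$-cutoff: there is $t_n>0$ with $d_{n,2}(\mu_n,(1+a)t_n)\to0$ and $d_{n,2}(\mu_n,(1-a)t_n)\to\infty$ for all $a\in(0,1)$; $t_n$ is then a cutoff time. $a_n=O(b_n)$ means $\sup_na_n/b_n<\infty$. *)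

theory Defs
  imports "HOL-Analysis.Analysis" "HOL-Library.Landau_Symbols"
begin

definition is_generator :: "'a set \<Rightarrow> ('a \<Rightarrow> 'a \<Rightarrow> real) \<Rightarrow> bool" where
  "is_generator S L \<longleftrightarrow>
     (\<forall>x\<in>S. \<forall>y\<in>S. x \<noteq> y \<longrightarrow> 0 \<le> L x y) \<and> (\<forall>x\<in>S. (\<Sum>y\<in>S. L x y) = 0)"

definition irreducible_chain :: "'a set \<Rightarrow> ('a \<Rightarrow> 'a \<Rightarrow> real) \<Rightarrow> bool" where
  "irreducible_chain S L \<longleftrightarrow>
     (\<forall>x\<in>S. \<forall>y\<in>S. (x, y) \<in> {(u, v). u \<in> S \<and> v \<in> S \<and> 0 < L u v}\<^sup>*)"

definition stationary_positive :: "'a set \<Rightarrow> ('a \<Rightarrow> 'a \<Rightarrow> real) \<Rightarrow> ('a \<Rightarrow> real) \<Rightarrow> bool" where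
  "stationary_positive S L pd \<longleftrightarrow>
     (\<forall>x\<in>S. 0 < pd x) \<and> sum pd S = 1 \<and> (\<forall>y\<in>S. (\<Sum>x\<in>S. pd x * L x y) = 0)"

definition reversible_chain :: "'a set \<Rightarrow> ('a \<Rightarrow> 'a \<Rightarrow> real) \<Rightarrow> ('a \<Rightarrow> real) \<Rightarrow> bool" where
  "reversible_chain S L pd \<longleftrightarrow> (\<forall>x\<in>S. \<forall>y\<in>S. pd x * L x y = pd y * L y x)"

definition prob_distr :: "'a set \<Rightarrow> ('a \<Rightarrow> real) \<Rightarrow> bool" where
  "prob_distr S p \<longleftrightarrow> (\<forall>x\<in>S. 0 \<le> p x) \<and> sum p S = 1"

primrec mat_pow :: "'a set \<Rightarrow> ('a \<Rightarrow> 'a \<Rightarrow> real) \<Rightarrow> nat \<Rightarrow> 'a \<Rightarrow> 'a \<Rightarrow> real" where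
  "mat_pow S L 0 x y = (if x = y then 1 else 0)"
| "mat_pow S L (Suc k) x y = (\<Sum>z\<in>S. mat_pow S L k x z * L z y)"

definition heat_kernel :: "'a set \<Rightarrow> ('a \<Rightarrow> 'a \<Rightarrow> real) \<Rightarrow> real \<Rightarrow> 'a \<Rightarrow> 'a \<Rightarrow> real" where
  "heat_kernel S L t x y = (\<Sum>k. t ^ k / fact k * mat_pow S L k x y)"

definition muH :: "'a set \<Rightarrow> ('a \<Rightarrow> 'a \<Rightarrow> real) \<Rightarrow> ('a \<Rightarrow> real) \<Rightarrow> real \<Rightarrow> 'a \<Rightarrow> real" where
  "muH S L mu t y = (\<Sum>x\<in>S. mu x * heat_kernel S L t x y)"

definition d2 :: "'a set \<Rightarrow> ('a \<Rightarrow> 'a \<Rightarrow> real) \<Rightarrow> ('a \<Rightarrow> real) \<Rightarrow> ('a \<Rightarrow> real) \<Rightarrow> real \<Rightarrow> real" where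
  "d2 S L pd mu t = sqrt (\<Sum>y\<in>S. \<bar>muH S L mu t y / pd y - 1\<bar>\<^sup>2 * pd y)"

definition T2 :: "'a set \<Rightarrow> ('a \<Rightarrow> 'a \<Rightarrow> real) \<Rightarrow> ('a \<Rightarrow> real) \<Rightarrow> ('a \<Rightarrow> real) \<Rightarrow> real \<Rightarrow> real" where
  "T2 S L pd mu \<epsilon> = Inf {t. 0 \<le> t \<and> d2 S L pd mu t \<le> \<epsilon>}"

definition chi2 :: "'a set \<Rightarrow> ('a \<Rightarrow> real) \<Rightarrow> ('a \<Rightarrow> real) \<Rightarrow> real" where
  "chi2 S pd mu = (\<Sum>y\<in>S. (mu y)\<^sup>2 / pd y)"

definition spectral_data :: "'a set \<Rightarrow> ('a \<Rightarrow> 'a \<Rightarrow> real) \<Rightarrow> ('a \<Rightarrow> real)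
    \<Rightarrow> (nat \<Rightarrow> real) \<Rightarrow> (nat \<Rightarrow> 'a \<Rightarrow> real) \<Rightarrow> bool" where
  "spectral_data S L pd lam phi \<longleftrightarrow>
     lam 0 = 0 \<and> (\<forall>x\<in>S. phi 0 x = 1) \<and>
     (2 \<le> card S \<longrightarrow> 0 < lam 1) \<and>
     (\<forall>i j. 1 \<le> i \<and> i \<le> j \<and> j < card S \<longrightarrow> lam i \<le> lam j) \<and>
     (\<forall>i < card S. \<forall>x\<in>S. (\<Sum>y\<in>S. L x y * phi i y) = - lam i * phi i x) \<and>
     (\<forall>i < card S. \<forall>k < card S.
        (\<Sum>x\<in>S. phi i x * phi k x * pd x) = (if i = k then 1 else 0))"

definition mu_of :: "'a set \<Rightarrow> ('a \<Rightarrow> real) \<Rightarrow> ('a \<Rightarrow> real) \<Rightarrow> real" where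
  "mu_of S mu f = (\<Sum>x\<in>S. mu x * f x)"

definition psum :: "'a set \<Rightarrow> ('a \<Rightarrow> real) \<Rightarrow> (nat \<Rightarrow> 'a \<Rightarrow> real) \<Rightarrow> nat \<Rightarrow> real" where
  "psum S mu phi j = (\<Sum>i = 1..j. \<bar>mu_of S mu (phi i)\<bar>\<^sup>2)"

definition jfun :: "'a set \<Rightarrow> ('a \<Rightarrow> real) \<Rightarrow> (nat \<Rightarrow> 'a \<Rightarrow> real) \<Rightarrow> real \<Rightarrow> nat" where
  "jfun S mu phi c = (LEAST j. 1 \<le> j \<and> j < card S \<and> c < psum S mu phi j)"

definition taufun :: "'a set \<Rightarrow> ('a \<Rightarrow> real) \<Rightarrow> (nat \<Rightarrow> real) \<Rightarrow> (nat \<Rightarrow> 'a \<Rightarrow> real) \<Rightarrow> real \<Rightarrow> real" where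
  "taufun S mu lam phi c =
     Max ((\<lambda>j. ln (1 + psum S mu phi j) / (2 * lam j)) ` {jfun S mu phi c ..< card S})"

definition L2_cutoff_time :: "(nat \<Rightarrow> 'a set) \<Rightarrow> (nat \<Rightarrow> 'a \<Rightarrow> 'a \<Rightarrow> real) \<Rightarrow> (nat \<Rightarrow> 'a \<Rightarrow> real)
    \<Rightarrow> (nat \<Rightarrow> 'a \<Rightarrow> real) \<Rightarrow> (nat \<Rightarrow> real) \<Rightarrow> bool" where
  "L2_cutoff_time S L pd mu t \<longleftrightarrow>
     (\<forall>\<^sub>F n in sequentially. 0 < t n) \<and>
     (\<forall>a. 0 < a \<and> a < 1 \<longrightarrow>
        ((\<lambda>n. d2 (S n) (L n) (pd n) (mu n) ((1 + a) * t n)) \<longlonglongrightarrow> 0) \<and>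
        filterlim (\<lambda>n. d2 (S n) (L n) (pd n) (mu n) ((1 - a) * t n)) at_top sequentially)"

definition has_L2_cutoff :: "(nat \<Rightarrow> 'a set) \<Rightarrow> (nat \<Rightarrow> 'a \<Rightarrow> 'a \<Rightarrow> real) \<Rightarrow> (nat \<Rightarrow> 'a \<Rightarrow> real)
    \<Rightarrow> (nat \<Rightarrow> 'a \<Rightarrow> real) \<Rightarrow> bool" where
  "has_L2_cutoff S L pd mu \<longleftrightarrow> (\<exists>t. L2_cutoff_time S L pd mu t)"

end

theory Submission
  imports Defs "HOL-Analysis.Analysis" "Jordan_Normal_Form.Determinant"
begin


lemma orth_complete:
  fixes S :: "'a set" and phi :: "nat \<Rightarrow> 'a \<Rightarrow> real"
  assumes finS: "finite S"
    and orth: "\<forall>i < card S. \<forall>k < card S. (\<Sum>x\<in>S. phi i x * phi k x * pd x) = (if i = k then 1 else 0)"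
    and pos: "\<forall>x\<in>S. 0 < pd x"
    and x: "x \<in> S" and y: "y \<in> S"
  shows "(\<Sum>i<card S. phi i x * phi i y * pd y) = (if x = y then 1 else 0)"
proof -
  define N where "N = card S"
  obtain e where e: "bij_betw e {0..<N} S"
    using ex_bij_betw_nat_finite[OF finS] unfolding N_def by blast
  define V :: "real mat" where "V = mat N N (\<lambda>(i,j). phi i (e j) * sqrt (pd (e j)))"
  have V: "V \<in> carrier_mat N N" unfolding V_def by auto
  have VT: "transpose_mat V \<in> carrier_mat N N" using V by auto
  have "V * transpose_mat V = 1\<^sub>m N"
  proof (rule eq_matI)
    fix i k assume i: "i < dim_row (1\<^sub>m N :: real mat)" and k: "k < dim_col (1\<^sub>m N :: real mat)"
    hence iN: "i < N" and kN: "k < N" by auto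
    have "(V * transpose_mat V) $$ (i, k) = (\<Sum>j\<in>{0..<N}. V $$ (i,j) * V $$ (k,j))"
      using V iN kN by (simp add: scalar_prod_def)
    also have "\<dots> = (\<Sum>j\<in>{0..<N}. phi i (e j) * phi k (e j) * pd (e j))"
    proof (rule sum.cong)
      fix j assume "j \<in> {0..<N}"
      hence jN: "j < N" by auto
      hence "0 < pd (e j)" using pos e unfolding bij_betw_def by auto
      hence sq: "sqrt (pd (e j)) * sqrt (pd (e j)) = pd (e j)" by simp
      show "V $$ (i,j) * V $$ (k,j) = phi i (e j) * phi k (e j) * pd (e j)"
        using iN kN jN sq by (simp add: V_def mult_ac)
    qed simp
    also have "\<dots> = (\<Sum>x\<in>S. phi i x * phi k x * pd x)"
      using sum.reindex_bij_betw[OF e, of "\<lambda>x. phi i x * phi k x * pd x"] by simp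
    also have "\<dots> = 1\<^sub>m N $$ (i, k)" using orth iN kN unfolding N_def by simp
    finally show "(V * transpose_mat V) $$ (i, k) = 1\<^sub>m N $$ (i, k)" .
  qed (use V in auto)
  hence TV: "transpose_mat V * V = 1\<^sub>m N" using mat_mult_left_right_inverse[OF V VT] by blast
  obtain j where j: "j < N" "e j = x" using e x unfolding bij_betw_def by (auto simp: image_iff)
  obtain l where l: "l < N" "e l = y" using e y unfolding bij_betw_def by (auto simp: image_iff)
  have "(transpose_mat V * V) $$ (j, l) = (\<Sum>i\<in>{0..<N}. V $$ (i,j) * V $$ (i,l))"
    using V j l by (simp add: scalar_prod_def)
  also have "\<dots> = (\<Sum>i<N. phi i x * phi i y) * (sqrt (pd x) * sqrt (pd y))"
  proof -
    have "(\<Sum>i\<in>{0..<N}. V $$ (i,j) * V $$ (i,l)) = (\<Sum>i<N. (phi i x * phi i y) * (sqrt (pd x) * sqrt (pd y)))"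
      using j l by (intro sum.cong) (auto simp: V_def)
    also have "\<dots> = (\<Sum>i<N. phi i x * phi i y) * (sqrt (pd x) * sqrt (pd y))"
      by (rule sum_distrib_right[symmetric])
    finally show ?thesis .
  qed
  finally have eq: "(\<Sum>i<N. phi i x * phi i y) * (sqrt (pd x) * sqrt (pd y)) = (if j = l then 1 else 0)"
    using TV j l by simp
  have px: "0 < pd x" and py: "0 < pd y" using pos x y by auto
  show ?thesis
  proof (cases "x = y")
    case True
    with j l e have "j = l" unfolding bij_betw_def inj_on_def by auto
    have sq: "sqrt (pd x) * sqrt (pd y) = pd y" using True px by simp
    from eq True \<open>j = l\<close> have "(\<Sum>i<N. phi i x * phi i y) * pd y = 1"
      unfolding sq by simp
    thus ?thesis using True unfolding N_def by (simp add: sum_distrib_right)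
  next
    case False
    with j l have "j \<noteq> l" by auto
    with eq px py have "(\<Sum>i<N. phi i x * phi i y) = 0" by simp
    thus ?thesis using False unfolding N_def by (simp add: sum_distrib_right[symmetric])
  qed
qed



locale chain =
  fixes S :: "'a set" and L :: "'a \<Rightarrow> 'a \<Rightarrow> real" and pd mu :: "'a \<Rightarrow> real"
    and lam :: "nat \<Rightarrow> real" and phi :: "nat \<Rightarrow> 'a \<Rightarrow> real"
  assumes finS: "finite S"
    and stat: "stationary_positive S L pd"
    and rev: "reversible_chain S L pd"
    and init: "prob_distr S mu"
    and spec: "spectral_data S L pd lam phi"
begin

lemma pos: "\<forall>x\<in>S. 0 < pd x" using stat unfolding stationary_positive_def by auto
lemma orth: "\<forall>i < card S. \<forall>k < card S. (\<Sum>x\<in>S. phi i x * phi k x * pd x) = (if i = k then 1 else 0)"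
  using spec unfolding spectral_data_def by auto
lemma eig: "\<And>i x. i < card S \<Longrightarrow> x \<in> S \<Longrightarrow> (\<Sum>y\<in>S. L x y * phi i y) = - lam i * phi i x"
  using spec unfolding spectral_data_def by auto

lemma compl: "x \<in> S \<Longrightarrow> y \<in> S \<Longrightarrow> (\<Sum>i<card S. phi i x * phi i y * pd y) = (if x = y then 1 else 0)"
  using orth_complete[OF finS orth pos] by blast

lemma left_eig: assumes i: "i < card S" and y: "y \<in> S"
  shows "(\<Sum>z\<in>S. phi i z * pd z * L z y) = - lam i * phi i y * pd y"
proof -
  have "(\<Sum>z\<in>S. phi i z * pd z * L z y) = (\<Sum>z\<in>S. pd y * (L y z * phi i z))"
    using rev y unfolding reversible_chain_def by (intro sum.cong) (auto simp: mult_ac)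
  also have "\<dots> = pd y * (- lam i * phi i y)" using eig[OF i y] by (simp add: sum_distrib_left[symmetric])
  finally show ?thesis by simp
qed

lemma matpow: "x \<in> S \<Longrightarrow> y \<in> S \<Longrightarrow>
   mat_pow S L k x y = (\<Sum>i<card S. (- lam i) ^ k * (phi i x * phi i y * pd y))"
proof (induction k arbitrary: y)
  case 0
  then show ?case using compl[of x y] by simp
next
  case (Suc k)
  have "mat_pow S L (Suc k) x y = (\<Sum>z\<in>S. (\<Sum>i<card S. (- lam i) ^ k * (phi i x * phi i z * pd z)) * L z y)"
    using Suc by simp
  also have "\<dots> = (\<Sum>i<card S. (- lam i) ^ k * phi i x * (\<Sum>z\<in>S. phi i z * pd z * L z y))"
    by (simp add: sum_distrib_right sum_distrib_left mult_ac sum.swap[of _ S])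
  also have "\<dots> = (\<Sum>i<card S. (- lam i) ^ k * phi i x * (- lam i * phi i y * pd y))"
    using left_eig Suc.prems by (intro sum.cong) auto
  also have "\<dots> = (\<Sum>i<card S. (- lam i) ^ Suc k * (phi i x * phi i y * pd y))"
    by (intro sum.cong) (auto simp: mult_ac)
  finally show ?case .
qed

lemma heat: assumes x: "x \<in> S" and y: "y \<in> S"
  shows "heat_kernel S L t x y = (\<Sum>i<card S. exp (- lam i * t) * (phi i x * phi i y * pd y))"
proof -
  have "(\<lambda>k. \<Sum>i<card S. (- lam i * t) ^ k / fact k * (phi i x * phi i y * pd y))
        sums (\<Sum>i<card S. exp (- lam i * t) * (phi i x * phi i y * pd y))"
  proof (rule sums_sum)
    fix i
    have "(\<lambda>k. (- lam i * t) ^ k /\<^sub>R fact k) sums exp (- lam i * t)" by (rule exp_converges)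
    hence "(\<lambda>k. (- lam i * t) ^ k / fact k) sums exp (- lam i * t)" by (simp add: divide_inverse_commute)
    thus "(\<lambda>k. (- lam i * t) ^ k / fact k * (phi i x * phi i y * pd y)) sums (exp (- lam i * t) * (phi i x * phi i y * pd y))"
      by (rule sums_mult2)
  qed
  moreover have "(\<lambda>k. t ^ k / fact k * mat_pow S L k x y) =
      (\<lambda>k. \<Sum>i<card S. (- lam i * t) ^ k / fact k * (phi i x * phi i y * pd y))"
  proof (rule ext)
    fix k
    have pw: "\<And>i. (- lam i * t) ^ k = (- lam i) ^ k * t ^ k" by (rule power_mult_distrib)
    show "t ^ k / fact k * mat_pow S L k x y =
      (\<Sum>i<card S. (- lam i * t) ^ k / fact k * (phi i x * phi i y * pd y))"
      unfolding matpow[OF x y] pw sum_distrib_left by (intro sum.cong) auto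
  qed
  ultimately show ?thesis unfolding heat_kernel_def by (simp add: sums_iff)
qed

definition m where "m i = mu_of S mu (phi i)"

lemma muH_eq: assumes y: "y \<in> S"
  shows "muH S L mu t y = pd y * (\<Sum>i<card S. exp (- lam i * t) * m i * phi i y)"
proof -
  have "muH S L mu t y = (\<Sum>x\<in>S. mu x * (\<Sum>i<card S. exp (- lam i * t) * (phi i x * phi i y * pd y)))"
    unfolding muH_def using heat y by (intro sum.cong) auto
  also have "\<dots> = pd y * (\<Sum>i<card S. exp (- lam i * t) * m i * phi i y)"
    unfolding m_def mu_of_def
    by (simp add: sum_distrib_left sum_distrib_right mult_ac sum.swap[of _ S])
  finally show ?thesis .
qed

lemma Sne: "S \<noteq> {}" using init unfolding prob_distr_def by auto
lemma cardpos: "0 < card S" using Sne finS by (simp add: card_gt_0_iff)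

lemma m0: "m 0 = 1"
  using init spec unfolding m_def mu_of_def prob_distr_def spectral_data_def by simp

lemma ratio: assumes y: "y \<in> S"
  shows "muH S L mu t y / pd y - 1 = (\<Sum>i\<in>{1..<card S}. exp (- lam i * t) * m i * phi i y)"
proof -
  have py: "pd y \<noteq> 0" using pos y by force
  have "{..<card S} = insert 0 {1..<card S}" using cardpos by auto
  hence "(\<Sum>i<card S. exp (- lam i * t) * m i * phi i y) = 1 + (\<Sum>i\<in>{1..<card S}. exp (- lam i * t) * m i * phi i y)"
    using spec y m0 unfolding spectral_data_def by simp
  thus ?thesis using muH_eq[OF y] py by simp
qed

lemma d2sq: "(d2 S L pd mu t)\<^sup>2 = (\<Sum>i\<in>{1..<card S}. \<bar>m i\<bar>\<^sup>2 * exp (- 2 * lam i * t))"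
proof -
  let ?I = "{1..<card S}"
  let ?c = "\<lambda>i. exp (- lam i * t) * m i"
  have "(\<Sum>y\<in>S. \<bar>muH S L mu t y / pd y - 1\<bar>\<^sup>2 * pd y)
      = (\<Sum>y\<in>S. (\<Sum>i\<in>?I. ?c i * phi i y) * (\<Sum>k\<in>?I. ?c k * phi k y) * pd y)"
    using ratio by (intro sum.cong) (auto simp: power2_eq_square)
  also have "\<dots> = (\<Sum>i\<in>?I. \<Sum>k\<in>?I. ?c i * ?c k * (\<Sum>y\<in>S. phi i y * phi k y * pd y))"
    by (simp add: sum_product sum_distrib_left sum_distrib_right mult_ac sum.swap[of _ S])
  also have "\<dots> = (\<Sum>i\<in>?I. \<Sum>k\<in>?I. ?c i * ?c k * (if i = k then 1 else 0))"
    using orth by (intro sum.cong) auto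
  also have "\<dots> = (\<Sum>i\<in>?I. ?c i * ?c i)" by (simp add: if_distrib cong: if_cong)
  also have "\<dots> = (\<Sum>i\<in>?I. \<bar>m i\<bar>\<^sup>2 * exp (- 2 * lam i * t))"
  proof (intro sum.cong refl)
    fix i
    have "exp (- 2 * lam i * t) = exp (- lam i * t + - lam i * t)" by simp
    also have "\<dots> = exp (- lam i * t) * exp (- lam i * t)" by (rule exp_add)
    finally show "?c i * ?c i = \<bar>m i\<bar>\<^sup>2 * exp (- 2 * lam i * t)"
      by (simp add: power2_eq_square mult_ac)
  qed
  finally have eq: "(\<Sum>y\<in>S. \<bar>muH S L mu t y / pd y - 1\<bar>\<^sup>2 * pd y) = (\<Sum>i\<in>?I. \<bar>m i\<bar>\<^sup>2 * exp (- 2 * lam i * t))" .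
  have "0 \<le> (\<Sum>y\<in>S. \<bar>muH S L mu t y / pd y - 1\<bar>\<^sup>2 * pd y)"
    using pos by (intro sum_nonneg) (auto intro: mult_nonneg_nonneg less_imp_le)
  thus ?thesis unfolding d2_def using eq by simp
qed

lemma d2_eq: "d2 S L pd mu t = sqrt (\<Sum>i\<in>{1..<card S}. \<bar>m i\<bar>\<^sup>2 * exp (- 2 * lam i * t))"
proof -
  have "0 \<le> d2 S L pd mu t" unfolding d2_def
    using pos by (intro real_sqrt_ge_zero sum_nonneg mult_nonneg_nonneg) (auto intro: less_imp_le)
  thus ?thesis using d2sq[of t] real_sqrt_unique by metis
qed

lemma d2_eq': "d2 S L pd mu t = sqrt (\<Sum>i\<in>{1..<card S}. \<bar>mu_of S mu (phi i)\<bar>\<^sup>2 * exp (- 2 * lam i * t))"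
  using d2_eq unfolding m_def .

lemma muH0: "y \<in> S \<Longrightarrow> muH S L mu 0 y = mu y"
proof -
  assume y: "y \<in> S"
  have "muH S L mu 0 y = (\<Sum>x\<in>S. mu x * (\<Sum>i<card S. phi i x * phi i y * pd y))"
    unfolding muH_def using heat y by (intro sum.cong) auto
  also have "\<dots> = (\<Sum>x\<in>S. mu x * (if x = y then 1 else 0))"
    using compl y by (intro sum.cong) auto
  also have "\<dots> = mu y" using y finS by (simp add: if_distrib cong: if_cong)
  finally show ?thesis .
qed

lemma chi2_eq: "chi2 S pd mu = 1 + (\<Sum>i\<in>{1..<card S}. \<bar>m i\<bar>\<^sup>2)"
proof -
  have "(\<Sum>i\<in>{1..<card S}. \<bar>m i\<bar>\<^sup>2) = (d2 S L pd mu 0)\<^sup>2" using d2sq[of 0] by simp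
  also have "\<dots> = (\<Sum>y\<in>S. (mu y / pd y - 1)\<^sup>2 * pd y)"
    using d2sq[of 0] unfolding d2_def using muH0
    by (subst real_sqrt_pow2) (auto intro!: sum_nonneg simp: power2_eq_square pos less_imp_le intro!: sum.cong)
  also have "\<dots> = (\<Sum>y\<in>S. (mu y)\<^sup>2 / pd y - 2 * mu y + pd y)"
    using pos by (intro sum.cong) (auto simp: power2_eq_square field_simps)
  also have "\<dots> = chi2 S pd mu - 2 * sum mu S + sum pd S"
    unfolding chi2_def by (simp add: sum.distrib sum_subtractf sum_distrib_left)
  also have "\<dots> = chi2 S pd mu - 1"
    using init stat unfolding prob_distr_def stationary_positive_def by simp
  finally show ?thesis by simp
qed

lemma chi2_eq': "chi2 S pd mu = 1 + (\<Sum>i\<in>{1..<card S}. \<bar>mu_of S mu (phi i)\<bar>\<^sup>2)"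
  using chi2_eq unfolding m_def .

end



locale fam =
  fixes N :: "nat \<Rightarrow> nat" and a lam :: "nat \<Rightarrow> nat \<Rightarrow> real"
  assumes a_nn: "\<And>n i. 0 \<le> a n i"
    and lam_pos: "\<And>n i. 1 \<le> i \<Longrightarrow> i < N n \<Longrightarrow> 0 < lam n i"
    and lam_mono: "\<And>n i j. 1 \<le> i \<Longrightarrow> i \<le> j \<Longrightarrow> j < N n \<Longrightarrow> lam n i \<le> lam n j"
    and big: "filterlim (\<lambda>n. \<Sum>i = 1..N n - 1. a n i) at_top sequentially"
begin

definition A where "A n j = (\<Sum>i = 1..j. a n i)"
definition D where "D n t = (\<Sum>i\<in>{1..<N n}. a n i * exp (- 2 * lam n i * t))"
definition T where "T n \<epsilon> = Inf {t. 0 \<le> t \<and> sqrt (D n t) \<le> \<epsilon>}"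
definition J where "J n c = (LEAST j. 1 \<le> j \<and> j < N n \<and> c < A n j)"
definition f where "f n j = ln (1 + A n j) / (2 * lam n j)"
definition tau where "tau n c = Max ((\<lambda>j. ln (1 + A n j) / (2 * lam n j)) ` {J n c ..< N n})"
definition G where "G n c \<longleftrightarrow> c < A n (N n - 1)"

lemma tau_f: "tau n c = Max (f n ` {J n c ..< N n})" unfolding tau_def f_def by simp

lemma evG: "eventually (\<lambda>n. G n c) sequentially"
  using big unfolding G_def A_def filterlim_at_top_dense by auto

lemma A_nn: "0 \<le> A n j" unfolding A_def using a_nn by (simp add: sum_nonneg)

lemma A_mono: "i \<le> j \<Longrightarrow> A n i \<le> A n j"
  unfolding A_def using a_nn by (intro sum_mono2) auto

lemma A0: "A n 0 = 0" unfolding A_def by simp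

lemma G_N: "G n c \<Longrightarrow> 0 \<le> c \<Longrightarrow> 2 \<le> N n"
proof (rule ccontr)
  assume "G n c" "0 \<le> c" "\<not> 2 \<le> N n"
  hence "N n - 1 = 0" by auto
  with \<open>G n c\<close> \<open>0 \<le> c\<close> show False unfolding G_def using A0[of n] by simp
qed

lemma G_mono: "G n c' \<Longrightarrow> c \<le> c' \<Longrightarrow> G n c" unfolding G_def by simp

lemma J_ex: "G n c \<Longrightarrow> 0 \<le> c \<Longrightarrow> 1 \<le> N n - 1 \<and> N n - 1 < N n \<and> c < A n (N n - 1)"
  using G_N[of n c] unfolding G_def by auto

lemma J_props: assumes "G n c" "0 \<le> c"
  shows "1 \<le> J n c" "J n c < N n" "c < A n (J n c)"
proof -
  have "1 \<le> J n c \<and> J n c < N n \<and> c < A n (J n c)"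
    unfolding J_def by (rule LeastI_ex) (use J_ex[OF assms] in blast)
  thus "1 \<le> J n c" "J n c < N n" "c < A n (J n c)" by auto
qed

lemma J_below: assumes "G n c" "0 \<le> c" "i < J n c" shows "A n i \<le> c"
proof (cases "i = 0")
  case True thus ?thesis using assms A0 by simp
next
  case False
  have "i < N n" using J_props[OF assms(1,2)] assms(3) by simp
  hence "\<not> (1 \<le> i \<and> i < N n \<and> c < A n i)" using not_less_Least[of i] assms(3) unfolding J_def by blast
  thus ?thesis using False \<open>i < N n\<close> by auto
qed

lemma J_le: assumes "G n c'" "0 \<le> c" "c \<le> c'" shows "J n c \<le> J n c'"
proof -
  have "1 \<le> J n c' \<and> J n c' < N n \<and> c < A n (J n c')"
    using J_props[OF assms(1)] assms by force
  thus ?thesis unfolding J_def by (rule Least_le)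
qed

lemma lamJ_pos: "G n c \<Longrightarrow> 0 \<le> c \<Longrightarrow> 0 < lam n (J n c)"
  using J_props lam_pos by blast

lemma lamJ_mono: assumes "G n c'" "0 \<le> c" "c \<le> c'" shows "lam n (J n c) \<le> lam n (J n c')"
  using J_props[OF assms(1)] J_props[OF G_mono[OF assms(1,3)] assms(2)] J_le[OF assms] assms
  by (intro lam_mono) auto

lemma tau_fin: "finite (f n ` {J n c ..< N n})" by simp

lemma tau_ne: "G n c \<Longrightarrow> 0 \<le> c \<Longrightarrow> f n ` {J n c ..< N n} \<noteq> {}"
  using J_props by auto

lemma tau_ge: "G n c \<Longrightarrow> 0 \<le> c \<Longrightarrow> J n c \<le> j \<Longrightarrow> j < N n \<Longrightarrow> f n j \<le> tau n c"
  unfolding tau_f by (intro Max_ge) auto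

lemma tau_attain: assumes "G n c" "0 \<le> c"
  obtains j where "J n c \<le> j" "j < N n" "tau n c = f n j"
proof -
  have "tau n c \<in> f n ` {J n c ..< N n}" unfolding tau_f
    using tau_ne[OF assms] by (intro Max_in) auto
  thus ?thesis using that by auto
qed

lemma f_pos: assumes "G n c" "0 \<le> c" shows "0 < f n (J n c)"
proof -
  have "0 < A n (J n c)" using J_props[OF assms] assms by linarith
  hence "0 < ln (1 + A n (J n c))" by simp
  thus ?thesis unfolding f_def using lamJ_pos[OF assms] by simp
qed

lemma tau_pos: "G n c \<Longrightarrow> 0 \<le> c \<Longrightarrow> 0 < tau n c"
  using f_pos tau_ge J_props by (meson le_refl less_le_trans)

lemma tau_mono: assumes "G n c'" "0 \<le> c" "c \<le> c'" shows "tau n c' \<le> tau n c"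
  unfolding tau_f using tau_ne[OF assms(1)] assms J_le[OF assms]
  by (intro Max_mono) auto

lemma A_le_exp: assumes "G n c" "0 \<le> c" "J n c \<le> j" "j < N n"
  shows "1 + A n j \<le> exp (2 * lam n j * tau n c)"
proof -
  have lj: "0 < lam n j" using J_props[OF assms(1,2)] assms by (intro lam_pos) auto
  have "ln (1 + A n j) / (2 * lam n j) \<le> tau n c" using tau_ge[OF assms] unfolding f_def .
  hence "ln (1 + A n j) \<le> 2 * lam n j * tau n c" using lj by (simp add: divide_le_eq mult_ac)
  moreover have "0 < 1 + A n j" using A_nn[of n j] by simp
  ultimately show ?thesis by (metis exp_le_cancel_iff exp_ln)
qed

definition P where "P n k m t = (\<Sum>i\<in>{k..<m}. a n i * exp (- 2 * lam n i * t))"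

lemma D_P: "D n t = P n 1 (N n) t" unfolding D_def P_def by simp

lemma P_nn: "0 \<le> P n k m t" unfolding P_def using a_nn by (intro sum_nonneg) auto

lemma P_split: "k \<le> l \<Longrightarrow> l \<le> m \<Longrightarrow> P n k m t = P n k l t + P n l m t"
  unfolding P_def by (simp add: sum.atLeastLessThan_concat)

lemma D_split: "1 \<le> l \<Longrightarrow> l \<le> N n \<Longrightarrow> D n t = P n 1 l t + P n l (N n) t"
  unfolding D_P by (rule P_split)

lemma D_nn: "0 \<le> D n t" unfolding D_P by (rule P_nn)

lemma mid_le: assumes "1 \<le> k" "k \<le> m" "m \<le> N n" "0 \<le> t"
  shows "P n k m t \<le> A n (m - 1) * exp (- 2 * lam n k * t)"
proof -
  have "P n k m t \<le> (\<Sum>i\<in>{k..<m}. a n i * exp (- 2 * lam n k * t))"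
    unfolding P_def
  proof (intro sum_mono mult_left_mono)
    fix i assume "i \<in> {k..<m}"
    hence "lam n k \<le> lam n i" using assms by (intro lam_mono) auto
    thus "exp (- 2 * lam n i * t) \<le> exp (- 2 * lam n k * t)" using assms(4)
      by (simp add: mult_right_mono)
  qed (use a_nn in auto)
  also have "\<dots> = (\<Sum>i\<in>{k..<m}. a n i) * exp (- 2 * lam n k * t)" by (simp add: sum_distrib_right)
  also have "(\<Sum>i\<in>{k..<m}. a n i) \<le> A n (m - 1)"
    unfolding A_def using assms a_nn by (intro sum_mono2) auto
  hence "(\<Sum>i\<in>{k..<m}. a n i) * exp (- 2 * lam n k * t) \<le> A n (m - 1) * exp (- 2 * lam n k * t)"
    by (simp add: mult_right_mono)
  finally show ?thesis .
qed

lemma head_le: assumes "1 \<le> k" "k \<le> N n" "0 \<le> t" shows "P n 1 k t \<le> A n (k - 1)"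
proof -
  have "P n 1 k t \<le> A n (k - 1) * exp (- 2 * lam n 1 * t)" using mid_le[of 1 k n t] assms by simp
  also have "\<dots> \<le> A n (k - 1) * 1"
  proof (cases "2 \<le> N n")
    case True
    hence "0 < lam n 1" by (intro lam_pos) auto
    thus ?thesis using assms A_nn by (intro mult_left_mono) auto
  next
    case False
    hence "k - 1 = 0" using assms by auto
    thus ?thesis using A0 by simp
  qed
  finally show ?thesis by simp
qed

lemma shift: assumes "1 \<le> k" "m \<le> N n" "0 \<le> s"
  shows "P n k m (t + s) \<le> exp (- 2 * lam n k * s) * P n k m t"
  unfolding P_def sum_distrib_left
proof (intro sum_mono)
  fix i assume "i \<in> {k..<m}"
  hence "lam n k \<le> lam n i" using assms by (intro lam_mono) auto
  hence "exp (- 2 * lam n i * s) \<le> exp (- 2 * lam n k * s)" using assms(3) by (simp add: mult_right_mono)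
  hence "a n i * (exp (- 2 * lam n i * t) * exp (- 2 * lam n i * s)) \<le> a n i * (exp (- 2 * lam n i * t) * exp (- 2 * lam n k * s))"
    using a_nn by (intro mult_left_mono) auto
  moreover have "exp (- 2 * lam n i * (t + s)) = exp (- 2 * lam n i * t) * exp (- 2 * lam n i * s)"
    by (simp add: distrib_left exp_add[symmetric])
  ultimately show "a n i * exp (- 2 * lam n i * (t + s)) \<le> exp (- 2 * lam n k * s) * (a n i * exp (- 2 * lam n i * t))"
    by (simp add: mult_ac)
qed

lemma D_anti: assumes "s \<le> t" shows "D n t \<le> D n s"
  unfolding D_def
proof (intro sum_mono mult_left_mono)
  fix i assume "i \<in> {1..<N n}"
  hence "0 < lam n i" by (intro lam_pos) auto
  thus "exp (- 2 * lam n i * t) \<le> exp (- 2 * lam n i * s)" using assms by simp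
qed (use a_nn in auto)

lemma D_lower: assumes "1 \<le> j" "j < N n" "0 \<le> t" shows "A n j * exp (- 2 * lam n j * t) \<le> D n t"
proof -
  have "A n j * exp (- 2 * lam n j * t) = (\<Sum>i = 1..j. a n i * exp (- 2 * lam n j * t))"
    unfolding A_def by (simp add: sum_distrib_right)
  also have "\<dots> \<le> (\<Sum>i = 1..j. a n i * exp (- 2 * lam n i * t))"
  proof (intro sum_mono mult_left_mono)
    fix i assume "i \<in> {1..j}"
    hence "lam n i \<le> lam n j" using assms by (intro lam_mono) auto
    thus "exp (- 2 * lam n j * t) \<le> exp (- 2 * lam n i * t)" using assms by (simp add: mult_right_mono)
  qed (use a_nn in auto)
  also have "\<dots> \<le> D n t" unfolding D_def using assms a_nn by (intro sum_mono2) auto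
  finally show ?thesis .
qed

lemma D_lower_tau: assumes "G n c" "0 \<le> c" "0 \<le> t" "t \<le> tau n c"
  shows "exp (2 * lam n (J n c) * (tau n c - t)) - 1 \<le> D n t"
proof -
  obtain j where j: "J n c \<le> j" "j < N n" "tau n c = f n j" using tau_attain[OF assms(1,2)] by blast
  have j1: "1 \<le> j" using J_props[OF assms(1,2)] j by auto
  have lj: "0 < lam n j" using j j1 by (intro lam_pos) auto
  have ljJ: "lam n (J n c) \<le> lam n j" using J_props[OF assms(1,2)] j by (intro lam_mono) auto
  have "ln (1 + A n j) = 2 * lam n j * tau n c" using j(3) lj unfolding f_def by simp
  moreover have "0 < 1 + A n j" using A_nn[of n j] by linarith
  ultimately have eA: "1 + A n j = exp (2 * lam n j * tau n c)" by (metis exp_ln)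
  have "exp (2 * lam n (J n c) * (tau n c - t)) - 1 \<le> exp (2 * lam n j * (tau n c - t)) - exp (- 2 * lam n j * t)"
  proof -
    have "exp (2 * lam n (J n c) * (tau n c - t)) \<le> exp (2 * lam n j * (tau n c - t))"
      using ljJ assms by (simp add: mult_right_mono)
    moreover have "exp (- 2 * lam n j * t) \<le> 1" using lj assms by simp
    ultimately show ?thesis by linarith
  qed
  also have "\<dots> = A n j * exp (- 2 * lam n j * t)"
  proof -
    have "A n j * exp (- 2 * lam n j * t) = exp (2 * lam n j * tau n c) * exp (- 2 * lam n j * t) - exp (- 2 * lam n j * t)"
    proof -
      have "A n j = exp (2 * lam n j * tau n c) - 1" using eA by simp
      thus ?thesis by (simp add: left_diff_distrib)
    qed
    also have "exp (2 * lam n j * tau n c) * exp (- 2 * lam n j * t) = exp (2 * lam n j * (tau n c - t))"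
      by (simp add: exp_add[symmetric] algebra_simps)
    finally show ?thesis by simp
  qed
  also have "\<dots> \<le> D n t" using D_lower j j1 assms by auto
  finally show ?thesis .
qed

lemma convex_exp_bound: fixes th X :: real assumes "0 \<le> th" "th \<le> 1" "0 \<le> X"
  shows "th * (1 - exp (- X)) \<le> 1 - exp (- (th * X))"
proof -
  have "exp ((1 - th) *\<^sub>R 0 + th *\<^sub>R (- X)) \<le> (1 - th) * exp 0 + th * exp (- X)"
    using convex_onD[OF exp_convex, of th 0 "- X"] assms by simp
  thus ?thesis by (simp add: algebra_simps)
qed

lemma expmul: fixes x y z :: real shows "x + y = z \<Longrightarrow> exp x * exp y = exp z" by (metis exp_add)

lemma elem_ineq: fixes u t p q :: real assumes u: "0 < u" "u \<le> t" and pq: "0 \<le> p" "p \<le> q"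
  shows "exp (2 * p * (t - u)) * (exp (- 2 * p * t) - exp (- 2 * q * t))
         \<le> (t / u) * (exp (- 2 * p * u) - exp (- 2 * q * u))"
proof -
  define d where "d = q - p"
  have d: "0 \<le> d" using pq d_def by simp
  have t0: "0 < t" using u by simp
  have e1: "exp (2 * p * (t - u)) * exp (- 2 * p * t) = exp (- 2 * p * u)"
    by (rule expmul) (simp add: algebra_simps)
  have e2: "exp (2 * p * (t - u)) * exp (- 2 * q * t) = exp (- 2 * p * u) * exp (- (2 * d * t))"
    using expmul[of "2 * p * (t - u)" "- 2 * q * t" "- 2 * p * u + - (2 * d * t)"]
      expmul[of "- 2 * p * u" "- (2 * d * t)" "- 2 * p * u + - (2 * d * t)"]
    unfolding d_def by (simp add: algebra_simps)
  have e3: "exp (- 2 * q * u) = exp (- 2 * p * u) * exp (- (2 * d * u))"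
    using expmul[of "- 2 * p * u" "- (2 * d * u)" "- 2 * q * u"] unfolding d_def by (simp add: algebra_simps)
  have L: "exp (2 * p * (t - u)) * (exp (- 2 * p * t) - exp (- 2 * q * t)) = exp (- 2 * p * u) * (1 - exp (- (2 * d * t)))"
    using e1 e2 by (simp add: right_diff_distrib)
  have R: "exp (- 2 * p * u) - exp (- 2 * q * u) = exp (- 2 * p * u) * (1 - exp (- (2 * d * u)))"
    using e3 by (simp add: right_diff_distrib)
  have "(u / t) * (1 - exp (- (2 * d * t))) \<le> 1 - exp (- ((u / t) * (2 * d * t)))"
    using u d by (intro convex_exp_bound) auto
  also have "(u / t) * (2 * d * t) = 2 * d * u" using t0 by simp
  finally have "(u / t) * (1 - exp (- (2 * d * t))) \<le> 1 - exp (- (2 * d * u))" .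
  hence "1 - exp (- (2 * d * t)) \<le> (t / u) * (1 - exp (- (2 * d * u)))"
    using u t0 by (simp add: field_simps)
  hence "exp (- 2 * p * u) * (1 - exp (- (2 * d * t))) \<le> exp (- 2 * p * u) * ((t / u) * (1 - exp (- (2 * d * u))))"
    by (intro mult_left_mono) auto
  thus ?thesis unfolding L R by (simp add: mult_ac)
qed

lemma tail_ind: assumes G: "G n c" "0 \<le> c" and tt: "tau n c < t"
  shows "J n c + d < N n \<Longrightarrow> P n (J n c) (J n c + d + 1) t \<le>
      A n (J n c + d) * exp (- 2 * lam n (J n c + d) * t)
      + (t / (t - tau n c)) * (exp (- 2 * lam n (J n c) * (t - tau n c)) - exp (- 2 * lam n (J n c + d) * (t - tau n c)))"
proof (induction d)
  case 0
  have J1: "1 \<le> J n c" using J_props[OF G] by simp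
  have "a n (J n c) \<le> A n (J n c)" unfolding A_def using J1 a_nn by (intro member_le_sum) auto
  hence "a n (J n c) * exp (- 2 * lam n (J n c) * t) \<le> A n (J n c) * exp (- 2 * lam n (J n c) * t)"
    by (simp add: mult_right_mono)
  thus ?case unfolding P_def by simp
next
  case (Suc d)
  let ?J = "J n c" let ?m = "J n c + d" let ?u = "t - tau n c"
  have J1: "1 \<le> ?J" using J_props[OF G] by simp
  have mN: "?m < N n" using Suc by simp
  have m1N: "?m + 1 < N n" using Suc by simp
  have tp: "0 < tau n c" using tau_pos[OF G] .
  have u: "0 < ?u" "?u \<le> t" using tt tp by auto
  have lm: "0 < lam n ?m" using J1 mN by (intro lam_pos) auto
  have lmm: "lam n ?m \<le> lam n (?m + 1)" using J1 m1N by (intro lam_mono) auto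
  have IH: "P n ?J (?m + 1) t \<le> A n ?m * exp (- 2 * lam n ?m * t)
      + (t / ?u) * (exp (- 2 * lam n ?J * ?u) - exp (- 2 * lam n ?m * ?u))" using Suc by simp
  have Psuc: "P n ?J (?m + 2) t = P n ?J (?m + 1) t + a n (?m + 1) * exp (- 2 * lam n (?m + 1) * t)"
    unfolding P_def by simp
  have Asuc: "A n (?m + 1) = A n ?m + a n (?m + 1)" unfolding A_def by simp
  have Aexp: "A n ?m \<le> exp (2 * lam n ?m * tau n c)"
    using A_le_exp[OF G, of ?m] mN by simp
  have xd: "0 \<le> exp (- 2 * lam n ?m * t) - exp (- 2 * lam n (?m + 1) * t)"
    using lmm u by (simp add: mult_right_mono)
  have key: "A n ?m * (exp (- 2 * lam n ?m * t) - exp (- 2 * lam n (?m + 1) * t))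
      \<le> (t / ?u) * (exp (- 2 * lam n ?m * ?u) - exp (- 2 * lam n (?m + 1) * ?u))"
  proof -
    have "A n ?m * (exp (- 2 * lam n ?m * t) - exp (- 2 * lam n (?m + 1) * t))
        \<le> exp (2 * lam n ?m * tau n c) * (exp (- 2 * lam n ?m * t) - exp (- 2 * lam n (?m + 1) * t))"
      using Aexp xd by (rule mult_right_mono)
    also have "\<dots> \<le> (t / ?u) * (exp (- 2 * lam n ?m * ?u) - exp (- 2 * lam n (?m + 1) * ?u))"
      using elem_ineq[OF u, of "lam n ?m" "lam n (?m + 1)"] lm lmm by simp
    finally show ?thesis .
  qed
  have "P n ?J (?m + 2) t \<le> A n ?m * exp (- 2 * lam n ?m * t)
      + (t / ?u) * (exp (- 2 * lam n ?J * ?u) - exp (- 2 * lam n ?m * ?u))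
      + a n (?m + 1) * exp (- 2 * lam n (?m + 1) * t)" using IH Psuc by simp
  also have "\<dots> = A n (?m + 1) * exp (- 2 * lam n (?m + 1) * t)
      + A n ?m * (exp (- 2 * lam n ?m * t) - exp (- 2 * lam n (?m + 1) * t))
      + (t / ?u) * (exp (- 2 * lam n ?J * ?u) - exp (- 2 * lam n ?m * ?u))"
    unfolding Asuc by (simp add: algebra_simps)
  also have "\<dots> \<le> A n (?m + 1) * exp (- 2 * lam n (?m + 1) * t)
      + (t / ?u) * (exp (- 2 * lam n ?m * ?u) - exp (- 2 * lam n (?m + 1) * ?u))
      + (t / ?u) * (exp (- 2 * lam n ?J * ?u) - exp (- 2 * lam n ?m * ?u))"
    using key by simp
  also have "\<dots> = A n (?m + 1) * exp (- 2 * lam n (?m + 1) * t)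
      + (t / ?u) * (exp (- 2 * lam n ?J * ?u) - exp (- 2 * lam n (?m + 1) * ?u))"
    by (simp add: algebra_simps)
  finally show ?case by (simp add: add.assoc)
qed

lemma tail: assumes G: "G n c" "0 \<le> c" and tt: "tau n c < t"
  shows "P n (J n c) (N n) t \<le> (1 + t / (t - tau n c)) * exp (- 2 * lam n (J n c) * (t - tau n c))"
proof -
  let ?J = "J n c" let ?u = "t - tau n c"
  define d where "d = N n - 1 - ?J"
  have JN: "?J < N n" "1 \<le> ?J" using J_props[OF G] by auto
  have md: "?J + d = N n - 1" "?J + d + 1 = N n" using JN unfolding d_def by auto
  have tp: "0 < tau n c" using tau_pos[OF G] .
  have u: "0 < ?u" "0 < t" using tt tp by auto
  have lm: "lam n ?J \<le> lam n (N n - 1)" using JN by (intro lam_mono) auto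
  have lJ: "0 < lam n ?J" using JN by (intro lam_pos) auto
  have "P n ?J (N n) t \<le> A n (N n - 1) * exp (- 2 * lam n (N n - 1) * t)
      + (t / ?u) * (exp (- 2 * lam n ?J * ?u) - exp (- 2 * lam n (N n - 1) * ?u))"
    using tail_ind[OF G tt, of d] md JN by simp
  also have "\<dots> \<le> exp (- 2 * lam n (N n - 1) * ?u) + (t / ?u) * exp (- 2 * lam n ?J * ?u)"
  proof -
    have JN1: "J n c \<le> N n - 1" "N n - 1 < N n" using JN by auto
    have Ale: "A n (N n - 1) \<le> exp (2 * lam n (N n - 1) * tau n c)"
      using A_le_exp[OF G JN1] by linarith
    have "A n (N n - 1) * exp (- 2 * lam n (N n - 1) * t) \<le> exp (2 * lam n (N n - 1) * tau n c) * exp (- 2 * lam n (N n - 1) * t)"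
      using Ale by (intro mult_right_mono) auto
    also have "\<dots> = exp (- 2 * lam n (N n - 1) * ?u)" by (simp add: exp_add[symmetric] algebra_simps)
    finally have 1: "A n (N n - 1) * exp (- 2 * lam n (N n - 1) * t) \<le> exp (- 2 * lam n (N n - 1) * ?u)" .
    have "(t / ?u) * (exp (- 2 * lam n ?J * ?u) - exp (- 2 * lam n (N n - 1) * ?u)) \<le> (t / ?u) * exp (- 2 * lam n ?J * ?u)"
      using u by (intro mult_left_mono) auto
    with 1 show ?thesis by linarith
  qed
  also have "\<dots> \<le> exp (- 2 * lam n ?J * ?u) + (t / ?u) * exp (- 2 * lam n ?J * ?u)"
    using lm u by (simp add: mult_right_mono)
  finally show ?thesis by (simp add: algebra_simps)
qed

lemma sq_le: "0 < e \<Longrightarrow> sqrt (D n t) \<le> e \<longleftrightarrow> D n t \<le> e\<^sup>2"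
  using real_sqrt_le_iff'[OF D_nn, of e] by simp

lemma T_alt: "0 < e \<Longrightarrow> T n e = Inf {t. 0 \<le> t \<and> D n t \<le> e\<^sup>2}"
  unfolding T_def using sq_le by simp

lemma bddT: "bdd_below {t. 0 \<le> t \<and> D n t \<le> e\<^sup>2}" by (rule bdd_belowI[of _ 0]) auto

lemma T_ne: assumes G: "G n c" "0 \<le> c" and e: "0 < e"
  shows "{t. 0 \<le> t \<and> D n t \<le> e\<^sup>2} \<noteq> {}"
proof -
  define B where "B = A n (N n - 1)"
  have N2: "2 \<le> N n" using G_N[OF G] .
  have B: "0 < B" using G unfolding G_def B_def by linarith
  have l: "0 < lam n 1" using N2 by (intro lam_pos) auto
  define t where "t = B / (2 * lam n 1 * e\<^sup>2)"
  have t0: "0 \<le> t" unfolding t_def using B l by simp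
  have "D n t \<le> B * exp (- 2 * lam n 1 * t)" unfolding D_P B_def using mid_le[of 1 "N n" n t] N2 t0 by simp
  also have "\<dots> = B / exp (2 * lam n 1 * t)" by (simp add: exp_minus field_simps)
  also have "\<dots> \<le> B / (B / e\<^sup>2)"
  proof (rule divide_left_mono)
    have "2 * lam n 1 * t = B / e\<^sup>2" unfolding t_def using l e by (simp add: field_simps)
    moreover have "2 * lam n 1 * t \<le> exp (2 * lam n 1 * t)" using exp_ge_add_one_self[of "2 * lam n 1 * t"] by linarith
    ultimately show "B / e\<^sup>2 \<le> exp (2 * lam n 1 * t)" by simp
  qed (use B e in auto)
  also have "\<dots> = e\<^sup>2" using B e by simp
  finally show ?thesis using t0 by blast
qed

lemma T_le: "0 < e \<Longrightarrow> 0 \<le> t \<Longrightarrow> D n t \<le> e\<^sup>2 \<Longrightarrow> T n e \<le> t"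
  unfolding T_alt by (intro cInf_lower bddT) auto

lemma T_nn: assumes "G n c" "0 \<le> c" "0 < e" shows "0 \<le> T n e"
  unfolding T_alt[OF assms(3)] by (rule cInf_greatest[OF T_ne[OF assms]]) auto

lemma T_ge: assumes "G n c" "0 \<le> c" "0 < e" "e\<^sup>2 < D n t" shows "t \<le> T n e"
  unfolding T_alt[OF assms(3)]
proof (rule cInf_greatest[OF T_ne[OF assms(1-3)]])
  fix s assume "s \<in> {t. 0 \<le> t \<and> D n t \<le> e\<^sup>2}"
  hence "D n s \<le> e\<^sup>2" by auto
  show "t \<le> s"
  proof (rule ccontr)
    assume "\<not> t \<le> s"
    hence "D n t \<le> D n s" by (intro D_anti) auto
    thus False using assms(4) \<open>D n s \<le> e\<^sup>2\<close> by linarith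
  qed
qed

lemma T_after: assumes "G n c" "0 \<le> c" "0 < e" "0 < h" shows "D n (T n e + h) \<le> e\<^sup>2"
proof -
  have "Inf {t. 0 \<le> t \<and> D n t \<le> e\<^sup>2} < T n e + h" using T_alt[OF assms(3)] assms(4) by simp
  then obtain s where s: "0 \<le> s" "D n s \<le> e\<^sup>2" "s < T n e + h"
    using cInf_less_iff[OF T_ne[OF assms(1-3)] bddT] by auto
  have "D n (T n e + h) \<le> D n s" using s by (intro D_anti) auto
  thus ?thesis using s by linarith
qed

lemma sqrt_tendsto0: assumes "\<And>n. 0 \<le> g n"
  shows "(\<lambda>n. sqrt (g n)) \<longlonglongrightarrow> 0 \<longleftrightarrow> g \<longlonglongrightarrow> 0"
proof
  assume "(\<lambda>n. sqrt (g n)) \<longlonglongrightarrow> 0"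
  hence "(\<lambda>n. (sqrt (g n))\<^sup>2) \<longlonglongrightarrow> 0\<^sup>2" by (intro tendsto_power)
  thus "g \<longlonglongrightarrow> 0" using assms by simp
next
  assume "g \<longlonglongrightarrow> 0"
  hence "(\<lambda>n. sqrt (g n)) \<longlonglongrightarrow> sqrt 0" by (intro tendsto_real_sqrt)
  thus "(\<lambda>n. sqrt (g n)) \<longlonglongrightarrow> 0" by simp
qed

lemma sqrt_attop: assumes "\<And>n. 0 \<le> g n"
  shows "filterlim (\<lambda>n. sqrt (g n)) at_top sequentially \<longleftrightarrow> filterlim g at_top sequentially"
proof
  assume "filterlim (\<lambda>n. sqrt (g n)) at_top sequentially"
  hence "filterlim (\<lambda>n. (sqrt (g n)) ^ 2) at_top sequentially" by (intro filterlim_pow_at_top) auto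
  thus "filterlim g at_top sequentially" using assms by simp
next
  assume "filterlim g at_top sequentially"
  thus "filterlim (\<lambda>n. sqrt (g n)) at_top sequentially" by (rule filterlim_compose[OF sqrt_at_top])
qed

definition cutD where "cutD t \<longleftrightarrow> (\<forall>\<^sub>F n in sequentially. 0 < t n) \<and>
  (\<forall>b. 0 < b \<and> b < 1 \<longrightarrow> ((\<lambda>n. D n ((1 + b) * t n)) \<longlonglongrightarrow> 0) \<and>
        filterlim (\<lambda>n. D n ((1 - b) * t n)) at_top sequentially)"

lemma cutD_b: "cutD t \<Longrightarrow> 0 < b \<Longrightarrow> b < 1 \<Longrightarrow> ((\<lambda>n. D n ((1 + b) * t n)) \<longlonglongrightarrow> 0) \<and>
        filterlim (\<lambda>n. D n ((1 - b) * t n)) at_top sequentially"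
  unfolding cutD_def by blast

lemma ex_M: fixes B r :: real assumes "0 \<le> B" "0 < r" shows "\<exists>M\<ge>1. B * exp (- 2 * M) \<le> r"
proof -
  define M where "M = max 1 (B / r)"
  have M: "1 \<le> M" "B / r \<le> M" unfolding M_def by auto
  have "M \<le> exp (2 * M)" using exp_ge_add_one_self[of "2 * M"] M by linarith
  hence "B * exp (- 2 * M) \<le> B / M" using assms M by (simp add: exp_minus field_simps mult_left_mono)
  also have "\<dots> \<le> r" using M assms by (simp add: field_simps)
  finally show ?thesis using M by blast
qed

lemma P1: assumes cut: "cutD t" and c: "0 < c"
  shows "filterlim (\<lambda>n. t n * lam n (J n c)) at_top sequentially"
  unfolding filterlim_at_top
proof
  fix Z :: real
  define K where "K = max Z 0"
  have "(\<lambda>n. D n ((1 + 1/2) * t n)) \<longlonglongrightarrow> 0" using cutD_b[OF cut, of "1/2"] by simp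
  hence e1: "\<forall>\<^sub>F n in sequentially. D n ((1 + 1/2) * t n) < c * exp (- 3 * K)"
    using c by (intro order_tendstoD) auto
  have e2: "\<forall>\<^sub>F n in sequentially. 0 < t n" using cut unfolding cutD_def by auto
  show "\<forall>\<^sub>F n in sequentially. Z \<le> t n * lam n (J n c)"
    using e1 e2 evG[of c]
  proof eventually_elim
    case (elim n)
    let ?l = "lam n (J n c)"
    have G: "G n c" "0 \<le> c" using elim c by auto
    have "c * exp (- 2 * ?l * ((1 + 1/2) * t n)) \<le> A n (J n c) * exp (- 2 * ?l * ((1 + 1/2) * t n))"
      using J_props[OF G] by (intro mult_right_mono) auto
    also have "\<dots> \<le> D n ((1 + 1/2) * t n)" using J_props[OF G] elim by (intro D_lower) auto
    finally have "c * exp (- 3 * (t n * ?l)) < c * exp (- 3 * K)" using elim by (simp add: algebra_simps)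
    hence "exp (- 3 * (t n * ?l)) < exp (- 3 * K)" using c by simp
    hence "K < t n * ?l" by simp
    thus ?case unfolding K_def by linarith
  qed
qed

lemma P2: assumes cut: "cutD t" and c: "0 < c" and e: "0 < e"
  shows "filterlim (\<lambda>n. T n e * lam n (J n c)) at_top sequentially"
proof -
  have "filterlim (\<lambda>n. (1/2) * (t n * lam n (J n c))) at_top sequentially"
    by (rule filterlim_tendsto_pos_mult_at_top[OF tendsto_const _ P1[OF cut c]]) simp
  moreover have "\<forall>\<^sub>F n in sequentially. (1/2) * (t n * lam n (J n c)) \<le> T n e * lam n (J n c)"
  proof -
    have "filterlim (\<lambda>n. D n ((1 - 1/2) * t n)) at_top sequentially" using cutD_b[OF cut, of "1/2"] by simp
    hence e1: "\<forall>\<^sub>F n in sequentially. e\<^sup>2 < D n ((1 - 1/2) * t n)" unfolding filterlim_at_top_dense by auto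
    show ?thesis using e1 evG[of c]
    proof eventually_elim
      case (elim n)
      have G: "G n c" "0 \<le> c" using elim c by auto
      have "(1 - 1/2) * t n \<le> T n e" by (rule T_ge[OF G e]) (use elim in simp)
      thus ?case using lamJ_pos[OF G] by (simp add: mult_right_mono)
    qed
  qed
  ultimately show ?thesis by (rule filterlim_at_top_mono)
qed

lemma P4pt: assumes e: "0 < e" and G: "G n c" "0 \<le> c" and ce: "c \<le> e\<^sup>2 / 2" and K: "0 \<le> K"
  and M: "1 \<le> M" "(2 + K) * exp (- 2 * M) \<le> e\<^sup>2 / 2" and tl: "tau n c * lam n (J n c) \<le> K"
  shows "T n e * lam n (J n c) \<le> K + M"
proof -
  let ?l = "lam n (J n c)" let ?tau = "tau n c"
  have l: "0 < ?l" using lamJ_pos[OF G] .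
  have tp: "0 < ?tau" using tau_pos[OF G] .
  define s where "s = M / ?l"
  have s: "0 < s" unfolding s_def using l M by simp
  define t where "t = ?tau + s"
  have JJ: "1 \<le> J n c" "J n c \<le> N n" using J_props[OF G] by auto
  have t0: "0 \<le> t" using tp s unfolding t_def by simp
  have h: "P n 1 (J n c) t \<le> c"
  proof -
    have "P n 1 (J n c) t \<le> A n (J n c - 1)" using head_le JJ t0 by auto
    also have "\<dots> \<le> c" using J_below[OF G] JJ by simp
    finally show ?thesis .
  qed
  have "P n (J n c) (N n) t \<le> (1 + t / (t - ?tau)) * exp (- 2 * ?l * (t - ?tau))"
    using tail[OF G, of "tau n c + s"] s unfolding t_def by simp
  also have "\<dots> = (2 + ?tau * ?l / M) * exp (- 2 * M)"
    unfolding t_def s_def using l M by (simp add: field_simps)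
  also have "\<dots> \<le> (2 + K) * exp (- 2 * M)"
  proof -
    have "?tau * ?l / M \<le> K / M" using tl M by (simp add: divide_right_mono)
    also have "\<dots> \<le> K"
    proof -
      have KM: "K \<le> K * M" using mult_left_mono[OF M(1) K] by simp
      thus ?thesis using M by (simp add: divide_le_eq)
    qed
    finally show ?thesis by (simp add: mult_right_mono)
  qed
  finally have "D n t \<le> e\<^sup>2" using D_split[OF JJ, of t] h ce M by linarith
  hence "T n e \<le> t" using T_le e t0 by auto
  hence "T n e * ?l \<le> t * ?l" using l by (simp add: mult_right_mono)
  also have "\<dots> = ?tau * ?l + M" unfolding t_def s_def using l by (simp add: field_simps)
  finally show ?thesis using tl by linarith
qed

lemma P4a: assumes H: "\<forall>c>0. filterlim (\<lambda>n. T n e * lam n (J n c)) at_top sequentially"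
  and e: "0 < e" and c: "0 < c" "c \<le> e\<^sup>2 / 2"
  shows "filterlim (\<lambda>n. tau n c * lam n (J n c)) at_top sequentially"
  unfolding filterlim_at_top
proof
  fix Z :: real
  define K where "K = max Z 0"
  have K: "0 \<le> K" unfolding K_def by simp
  obtain M where M: "1 \<le> M" "(2 + K) * exp (- 2 * M) \<le> e\<^sup>2 / 2" using ex_M[of "2 + K" "e\<^sup>2/2"] K e by auto
  have e1: "\<forall>\<^sub>F n in sequentially. K + M < T n e * lam n (J n c)"
    using H c unfolding filterlim_at_top_dense by auto
  show "\<forall>\<^sub>F n in sequentially. Z \<le> tau n c * lam n (J n c)"
    using e1 evG[of c]
  proof eventually_elim
    case (elim n)
    have G: "G n c" "0 \<le> c" using elim c by auto
    have "\<not> tau n c * lam n (J n c) \<le> K"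
      using P4pt[OF e G c(2) K M] elim by linarith
    thus ?case unfolding K_def by linarith
  qed
qed

lemma Qpt: assumes G: "G n c2" and c: "0 \<le> c1" "c1 \<le> c2"
  and big1: "ln (1 + c2) / 2 < tau n c1 * lam n (J n c1)"
  shows "tau n c2 = tau n c1"
proof -
  have G1: "G n c1" using G_mono[OF G c(2)] .
  have c2: "0 \<le> c2" using c by simp
  have le: "tau n c2 \<le> tau n c1" using tau_mono[OF G c] .
  obtain j where j: "J n c1 \<le> j" "j < N n" "tau n c1 = f n j" using tau_attain[OF G1 c(1)] by blast
  have J11: "1 \<le> J n c1" using J_props[OF G1 c(1)] by simp
  have l1: "0 < lam n (J n c1)" using lamJ_pos[OF G1 c(1)] .
  have ljJ: "lam n (J n c1) \<le> lam n j" using j J11 by (intro lam_mono) auto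
  have "\<not> j < J n c2"
  proof
    assume "j < J n c2"
    hence Aj: "A n j \<le> c2" using J_below[OF G c2] by simp
    have "f n j \<le> ln (1 + c2) / (2 * lam n (J n c1))"
      unfolding f_def using Aj A_nn[of n j] l1 ljJ
      by (intro frac_le) auto
    hence "tau n c1 * lam n (J n c1) \<le> ln (1 + c2) / (2 * lam n (J n c1)) * lam n (J n c1)"
      using j(3) l1 mult_right_mono by (metis less_imp_le)
    also have "\<dots> = ln (1 + c2) / 2" using l1 by simp
    finally show False using big1 by linarith
  qed
  hence "f n j \<le> tau n c2" using j by (intro tau_ge[OF G c2]) auto
  thus ?thesis using le j by linarith
qed

lemma Q: assumes c: "0 < c1" "c1 \<le> c2" and H: "filterlim (\<lambda>n. tau n c1 * lam n (J n c1)) at_top sequentially"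
  shows "\<forall>\<^sub>F n in sequentially. tau n c2 = tau n c1"
proof -
  have e1: "\<forall>\<^sub>F n in sequentially. ln (1 + c2) / 2 < tau n c1 * lam n (J n c1)"
    using H[unfolded filterlim_at_top_dense, rule_format, of "ln (1 + c2) / 2"] .
  show ?thesis using e1 evG[of c2]
    by eventually_elim (use Qpt c in auto)
qed

lemma Q': assumes c: "0 < c1" "c1 \<le> c2" and H: "filterlim (\<lambda>n. tau n c1 * lam n (J n c1)) at_top sequentially"
  shows "filterlim (\<lambda>n. tau n c2 * lam n (J n c2)) at_top sequentially"
proof (rule filterlim_at_top_mono[OF H])
  show "\<forall>\<^sub>F n in sequentially. tau n c1 * lam n (J n c1) \<le> tau n c2 * lam n (J n c2)"
    using Q[OF c H] evG[of c2]
  proof eventually_elim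
    case (elim n)
    have "lam n (J n c1) \<le> lam n (J n c2)" using lamJ_mono[of n c2 c1] elim c by auto
    moreover have "0 < tau n c1" using tau_pos[of n c1] G_mono[of n c2 c1] elim c by auto
    ultimately show ?case using elim by (simp add: mult_left_mono)
  qed
qed

lemma tau_ev_ge: assumes c: "0 < c" "0 < c'" and H: "filterlim (\<lambda>n. tau n c * lam n (J n c)) at_top sequentially"
  shows "\<forall>\<^sub>F n in sequentially. tau n c \<le> tau n c'"
proof (cases "c \<le> c'")
  case True
  show ?thesis using Q[OF c(1) True H] by eventually_elim simp
next
  case False
  show ?thesis using evG[of c] by eventually_elim (use tau_mono False c in auto)
qed

definition C2 where "C2 \<longleftrightarrow> (\<forall>e>0. \<forall>c>0. filterlim (\<lambda>n. T n e * lam n (J n c)) at_top sequentially)"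
definition C3 where "C3 \<longleftrightarrow> (\<exists>e>0. \<forall>c>0. filterlim (\<lambda>n. T n e * lam n (J n c)) at_top sequentially)"
definition C4 where "C4 \<longleftrightarrow> (\<forall>c>0. filterlim (\<lambda>n. tau n c * lam n (J n c)) at_top sequentially)"
definition C5 where "C5 \<longleftrightarrow> (\<forall>c'>0. \<forall>c>0. filterlim (\<lambda>n. tau n c' * lam n (J n c)) at_top sequentially)"
definition C6 where "C6 \<longleftrightarrow> (\<exists>c'>0. \<forall>c>0. filterlim (\<lambda>n. tau n c' * lam n (J n c)) at_top sequentially)"

lemma cut_C2: "cutD t \<Longrightarrow> C2" unfolding C2_def using P2 by blast
lemma C2_C3: assumes "C2" shows "C3"
  unfolding C3_def
proof (rule exI[of _ "1::real"], rule conjI)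
  show "0 < (1::real)" by simp
  show "\<forall>c>0. filterlim (\<lambda>n. T n 1 * lam n (J n c)) at_top sequentially"
    using assms unfolding C2_def by simp
qed

lemma C3_C4: assumes "C3" shows "C4"
  unfolding C4_def
proof (intro allI impI)
  fix c :: real assume c: "0 < c"
  obtain e where e: "0 < e" and H: "\<forall>c>0. filterlim (\<lambda>n. T n e * lam n (J n c)) at_top sequentially"
    using assms unfolding C3_def by blast
  show "filterlim (\<lambda>n. tau n c * lam n (J n c)) at_top sequentially"
  proof (cases "c \<le> e\<^sup>2 / 2")
    case True thus ?thesis using P4a[OF H e c] by blast
  next
    case False
    have "filterlim (\<lambda>n. tau n (e\<^sup>2/2) * lam n (J n (e\<^sup>2/2))) at_top sequentially"
      using P4a[OF H e, of "e\<^sup>2/2"] e by simp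
    thus ?thesis using Q'[of "e\<^sup>2/2" c] e False by auto
  qed
qed

lemma C4_C5: assumes "C4" shows "C5"
  unfolding C5_def
proof (intro allI impI)
  fix c' c :: real assume c: "0 < c'" "0 < c"
  have H: "filterlim (\<lambda>n. tau n c * lam n (J n c)) at_top sequentially" using assms c unfolding C4_def by auto
  show "filterlim (\<lambda>n. tau n c' * lam n (J n c)) at_top sequentially"
  proof (rule filterlim_at_top_mono[OF H])
    show "\<forall>\<^sub>F n in sequentially. tau n c * lam n (J n c) \<le> tau n c' * lam n (J n c)"
      using tau_ev_ge[OF c(2,1) H] evG[of c]
      by eventually_elim (use lamJ_pos c in \<open>auto intro: mult_right_mono less_imp_le\<close>)
  qed
qed

lemma C5_C6: assumes "C5" shows "C6"
  unfolding C6_def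
proof (rule exI[of _ "1::real"], rule conjI)
  show "0 < (1::real)" by simp
  show "\<forall>c>0. filterlim (\<lambda>n. tau n 1 * lam n (J n c)) at_top sequentially"
    using assms unfolding C5_def by simp
qed

lemma C6_C4: assumes "C6" shows "C4"
  unfolding C4_def
proof (intro allI impI)
  fix c :: real assume c: "0 < c"
  obtain c' where c': "0 < c'" and H: "\<forall>c>0. filterlim (\<lambda>n. tau n c' * lam n (J n c)) at_top sequentially"
    using assms unfolding C6_def by blast
  show "filterlim (\<lambda>n. tau n c * lam n (J n c)) at_top sequentially"
  proof (rule filterlim_at_top_mono[OF H[rule_format, OF c]])
    show "\<forall>\<^sub>F n in sequentially. tau n c' * lam n (J n c) \<le> tau n c * lam n (J n c)"
      using tau_ev_ge[OF c' c H[rule_format, OF c']] evG[of c]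
      by eventually_elim (use lamJ_pos c in \<open>auto intro: mult_right_mono less_imp_le\<close>)
  qed
qed

lemma C5_C4: "C5 \<Longrightarrow> C4" unfolding C5_def C4_def by blast

lemma C5_cut: assumes C5: "C5" and c: "0 < c" shows "cutD (\<lambda>n. tau n c)"
  unfolding cutD_def
proof (intro conjI allI impI)
  show "\<forall>\<^sub>F n in sequentially. 0 < tau n c" using evG[of c] by eventually_elim (use tau_pos c in auto)
  fix b :: real assume b: "0 < b \<and> b < 1"
  have H4: "filterlim (\<lambda>n. tau n c * lam n (J n c)) at_top sequentially" using C5 c unfolding C5_def by blast
  show "filterlim (\<lambda>n. D n ((1 - b) * tau n c)) at_top sequentially"
  proof (rule filterlim_at_top_mono[OF filterlim_tendsto_pos_mult_at_top[OF tendsto_const[of "2 * b"] _ H4]])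
    show "0 < 2 * b" using b by simp
    show "\<forall>\<^sub>F n in sequentially. 2 * b * (tau n c * lam n (J n c)) \<le> D n ((1 - b) * tau n c)"
      using evG[of c]
    proof eventually_elim
      case (elim n)
      have G: "G n c" "0 \<le> c" using elim c by auto
      have tp: "0 < tau n c" using tau_pos[OF G] .
      have "exp (2 * lam n (J n c) * (tau n c - (1 - b) * tau n c)) - 1 \<le> D n ((1 - b) * tau n c)"
        using b tp by (intro D_lower_tau[OF G]) (auto simp: mult_le_cancel_right1)
      moreover have "2 * lam n (J n c) * (tau n c - (1 - b) * tau n c) \<le> exp (2 * lam n (J n c) * (tau n c - (1 - b) * tau n c)) - 1"
        using exp_ge_add_one_self[of "2 * lam n (J n c) * (tau n c - (1 - b) * tau n c)"] by linarith
      moreover have "2 * lam n (J n c) * (tau n c - (1 - b) * tau n c) = 2 * b * (tau n c * lam n (J n c))"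
        by (simp add: algebra_simps)
      ultimately show ?case by linarith
    qed
  qed
  show "(\<lambda>n. D n ((1 + b) * tau n c)) \<longlonglongrightarrow> 0"
  proof (rule order_tendstoI)
    fix y :: real assume "y < 0"
    thus "\<forall>\<^sub>F n in sequentially. y < D n ((1 + b) * tau n c)" using D_nn by (intro always_eventually) (auto intro: less_le_trans)
  next
    fix e :: real assume e: "0 < e"
    define ct where "ct = min c (e / 4)"
    have ct: "0 < ct" "ct \<le> c" "ct \<le> e / 4" using c e unfolding ct_def by auto
    obtain K1 where K1: "1 \<le> K1" "c * exp (- 2 * K1) \<le> e / 4" using ex_M[of c "e/4"] c e by auto
    define B2 where "B2 = 1 + (1 + b) / b"
    have B2: "0 \<le> B2" unfolding B2_def using b by simp
    obtain K2 where K2: "1 \<le> K2" "B2 * exp (- 2 * K2) \<le> e / 4" using ex_M[of B2 "e/4"] B2 e by auto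
    have e1: "\<forall>\<^sub>F n in sequentially. K1 < tau n c * lam n (J n ct)"
      using C5 c ct unfolding C5_def filterlim_at_top_dense by blast
    have e2: "\<forall>\<^sub>F n in sequentially. K2 / b < tau n c * lam n (J n c)"
      using H4 unfolding filterlim_at_top_dense by blast
    show "\<forall>\<^sub>F n in sequentially. D n ((1 + b) * tau n c) < e"
      using e1 e2 evG[of c]
    proof eventually_elim
      case (elim n)
      have G: "G n c" "0 \<le> c" using elim c by auto
      have Gt: "G n ct" "0 \<le> ct" using G_mono[OF G(1) ct(2)] ct by auto
      let ?tau = "tau n c" let ?t = "(1 + b) * tau n c"
      let ?Jt = "J n ct" let ?J = "J n c"
      have tp: "0 < ?tau" using tau_pos[OF G] .
      have t0: "0 \<le> ?t" "?tau \<le> ?t" using tp b by auto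
      have JJ: "1 \<le> ?Jt" "?Jt \<le> ?J" "?J \<le> N n" "1 \<le> ?J"
        using J_props[OF G] J_props[OF Gt] J_le[OF G(1) Gt(2) ct(2)] by auto
      have split: "D n ?t = P n 1 ?Jt ?t + P n ?Jt ?J ?t + P n ?J (N n) ?t"
        using D_split[of ?Jt n ?t] P_split[of ?Jt ?J "N n" n ?t] JJ by simp
      have h1: "P n 1 ?Jt ?t \<le> e / 4"
      proof -
        have "P n 1 ?Jt ?t \<le> A n (?Jt - 1)" using head_le JJ t0 by auto
        also have "\<dots> \<le> ct" using J_below[OF Gt] JJ by simp
        finally show ?thesis using ct by simp
      qed
      have h2: "P n ?Jt ?J ?t \<le> e / 4"
      proof -
        have lt: "0 < lam n ?Jt" using lamJ_pos[OF Gt] .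
        have "P n ?Jt ?J ?t \<le> A n (?J - 1) * exp (- 2 * lam n ?Jt * ?t)" using mid_le JJ t0 by auto
        also have "\<dots> \<le> c * exp (- 2 * K1)"
        proof (rule mult_mono)
          show "A n (?J - 1) \<le> c" using J_below[OF G] JJ by simp
          have "K1 \<le> lam n ?Jt * ?tau" using elim by (simp add: mult_ac)
          also have "\<dots> \<le> lam n ?Jt * ?t" using lt t0 by (simp add: mult_left_mono)
          finally show "exp (- 2 * lam n ?Jt * ?t) \<le> exp (- 2 * K1)" by simp
        qed (use c in auto)
        also have "\<dots> \<le> e / 4" using K1 by simp
        finally show ?thesis .
      qed
      have h3: "P n ?J (N n) ?t \<le> e / 4"
      proof -
        have "P n ?J (N n) ?t \<le> (1 + ?t / (?t - ?tau)) * exp (- 2 * lam n ?J * (?t - ?tau))"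
          using tail[OF G] tp b by simp
        also have "?t / (?t - ?tau) = (1 + b) / b" using tp b by (simp add: field_simps)
        also have "(1 + (1 + b) / b) * exp (- 2 * lam n ?J * (?t - ?tau)) \<le> B2 * exp (- 2 * K2)"
          unfolding B2_def
        proof (rule mult_left_mono)
          have "K2 < b * (?tau * lam n ?J)" using elim b by (simp add: field_simps)
          also have "b * (?tau * lam n ?J) = lam n ?J * (?t - ?tau)" by (simp add: algebra_simps)
          finally show "exp (- 2 * lam n ?J * (?t - ?tau)) \<le> exp (- 2 * K2)" by simp
        qed (use b in simp)
        also have "\<dots> \<le> e / 4" using K2 by simp
        finally show ?thesis .
      qed
      show ?case using split h1 h2 h3 e by linarith
    qed
  qed
qed

lemma M2pt: assumes e: "0 < e" and d: "0 < d" and G: "G n c" and c: "0 < c"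
  and ct: "0 < ct" "ct \<le> c" "ct \<le> d\<^sup>2 / 3"
  and K: "c * exp (- 2 * K) \<le> d\<^sup>2 / 3" and hT: "K \<le> T n e * lam n (J n ct)"
  and M: "1 \<le> M" "e\<^sup>2 * exp (- 2 * M) \<le> d\<^sup>2 / 3"
  shows "T n d \<le> T n e + 2 * M / lam n (J n c)"
proof -
  have G0: "G n c" "0 \<le> c" using G c by auto
  have Gt: "G n ct" "0 \<le> ct" using G_mono[OF G ct(2)] ct by auto
  let ?l = "lam n (J n c)" let ?Jt = "J n ct" let ?J = "J n c"
  have l: "0 < ?l" using lamJ_pos[OF G0] .
  have lt: "0 < lam n ?Jt" using lamJ_pos[OF Gt] .
  have Tn: "0 \<le> T n e" using T_nn[OF G0 e] .
  define s where "s = M / ?l"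
  have s: "0 < s" unfolding s_def using l M by simp
  define t0 where "t0 = T n e + s"
  have Dt0: "D n t0 \<le> e\<^sup>2" unfolding t0_def using T_after[OF G0 e s] .
  define t where "t = t0 + s"
  have tT: "T n e \<le> t" "0 \<le> t" "0 \<le> t0" using s Tn unfolding t_def t0_def by auto
  have JJ: "1 \<le> ?Jt" "?Jt \<le> ?J" "?J \<le> N n" "1 \<le> ?J"
    using J_props[OF G0] J_props[OF Gt] J_le[OF G Gt(2) ct(2)] by auto
  have split: "D n t = P n 1 ?Jt t + P n ?Jt ?J t + P n ?J (N n) t"
    using D_split[of ?Jt n t] P_split[of ?Jt ?J "N n" n t] JJ by simp
  have h1: "P n 1 ?Jt t \<le> d\<^sup>2 / 3"
  proof -
    have "P n 1 ?Jt t \<le> A n (?Jt - 1)" using head_le JJ tT by auto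
    also have "\<dots> \<le> ct" using J_below[OF Gt] JJ by simp
    finally show ?thesis using ct by simp
  qed
  have h2: "P n ?Jt ?J t \<le> d\<^sup>2 / 3"
  proof -
    have "P n ?Jt ?J t \<le> A n (?J - 1) * exp (- 2 * lam n ?Jt * t)" using mid_le JJ tT by auto
    also have "\<dots> \<le> c * exp (- 2 * K)"
    proof (rule mult_mono)
      show "A n (?J - 1) \<le> c" using J_below[OF G0] JJ by simp
      have "K \<le> lam n ?Jt * T n e" using hT by (simp add: mult_ac)
      also have "\<dots> \<le> lam n ?Jt * t" using lt tT by (simp add: mult_left_mono)
      finally show "exp (- 2 * lam n ?Jt * t) \<le> exp (- 2 * K)" by simp
    qed (use c in auto)
    also have "\<dots> \<le> d\<^sup>2 / 3" using K .
    finally show ?thesis .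
  qed
  have h3: "P n ?J (N n) t \<le> d\<^sup>2 / 3"
  proof -
    have "P n ?J (N n) t \<le> exp (- 2 * ?l * s) * P n ?J (N n) t0"
      unfolding t_def using shift[of ?J "N n" n s t0] JJ s by simp
    also have "exp (- 2 * ?l * s) = exp (- 2 * M)" unfolding s_def using l by simp
    also have "P n ?J (N n) t0 \<le> D n t0" using D_split[of ?J n t0] JJ P_nn[of n 1 ?J t0] by simp
    hence "exp (- 2 * M) * P n ?J (N n) t0 \<le> exp (- 2 * M) * e\<^sup>2" using Dt0 by simp
    also have "\<dots> \<le> d\<^sup>2 / 3" using M by (simp add: mult_ac)
    finally show ?thesis .
  qed
  have "D n t \<le> d\<^sup>2" using split h1 h2 h3 by linarith
  hence "T n d \<le> t" using T_le[OF d tT(2)] by simp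
  thus ?thesis unfolding t_def t0_def s_def by simp
qed

lemma M2ev: assumes C2: "C2" and e: "0 < e" and d: "0 < d" and c: "0 < c"
  shows "\<exists>M. \<forall>\<^sub>F n in sequentially. T n d \<le> T n e + 2 * M / lam n (J n c)"
proof -
  define ct where "ct = min c (d\<^sup>2 / 3)"
  have ct: "0 < ct" "ct \<le> c" "ct \<le> d\<^sup>2 / 3" using c d unfolding ct_def by auto
  obtain K where K: "1 \<le> K" "c * exp (- 2 * K) \<le> d\<^sup>2 / 3" using ex_M[of c "d\<^sup>2/3"] c d by auto
  obtain M where M: "1 \<le> M" "e\<^sup>2 * exp (- 2 * M) \<le> d\<^sup>2 / 3" using ex_M[of "e\<^sup>2" "d\<^sup>2/3"] d by auto
  have e1: "\<forall>\<^sub>F n in sequentially. K \<le> T n e * lam n (J n ct)"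
    using C2 e ct unfolding C2_def filterlim_at_top by blast
  have "\<forall>\<^sub>F n in sequentially. T n d \<le> T n e + 2 * M / lam n (J n c)"
    using e1 evG[of c] by eventually_elim (rule M2pt[OF e d _ c ct K(2) _ M], auto)
  thus ?thesis by blast
qed

lemma M2: assumes C2: "C2" and e: "0 < e" and d: "0 < d" and c: "0 < c"
  shows "(\<lambda>n. \<bar>T n e - T n d\<bar>) \<in> O(\<lambda>n. 1 / lam n (J n c))"
proof -
  obtain M1 where M1: "\<forall>\<^sub>F n in sequentially. T n d \<le> T n e + 2 * M1 / lam n (J n c)"
    using M2ev[OF C2 e d c] by blast
  obtain M2 where M2: "\<forall>\<^sub>F n in sequentially. T n e \<le> T n d + 2 * M2 / lam n (J n c)"
    using M2ev[OF C2 d e c] by blast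
  show ?thesis
  proof (rule bigoI)
    show "\<forall>\<^sub>F n in sequentially. norm \<bar>T n e - T n d\<bar> \<le> (2 * max M1 M2) * norm (1 / lam n (J n c))"
      using M1 M2 evG[of c]
    proof eventually_elim
      case (elim n)
      have l: "0 < lam n (J n c)" using lamJ_pos elim c by auto
      have "2 * M1 / lam n (J n c) \<le> (2 * max M1 M2) * (1 / lam n (J n c))"
        using l by (simp add: divide_right_mono)
      moreover have "2 * M2 / lam n (J n c) \<le> (2 * max M1 M2) * (1 / lam n (J n c))"
        using l by (simp add: divide_right_mono)
      ultimately show ?case using elim l by simp
    qed
  qed
qed

lemma M3lower: assumes G: "G n c" "0 \<le> c" and e: "0 < e"
  shows "tau n c - e\<^sup>2 / lam n (J n c) \<le> T n e"
proof -
  let ?l = "lam n (J n c)" let ?t = "tau n c - e\<^sup>2 / lam n (J n c)"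
  have l: "0 < ?l" using lamJ_pos[OF G] .
  show ?thesis
  proof (cases "?t < 0")
    case True thus ?thesis using T_nn[OF G e] by linarith
  next
    case False
    have "0 < e\<^sup>2" using e by simp
    hence "e\<^sup>2 < exp (2 * e\<^sup>2) - 1" using exp_ge_add_one_self[of "2 * e\<^sup>2"] by linarith
    also have "2 * e\<^sup>2 = 2 * ?l * (tau n c - ?t)" using l by simp
    also have "exp (2 * ?l * (tau n c - ?t)) - 1 \<le> D n ?t"
      using False l e by (intro D_lower_tau[OF G]) auto
    finally show ?thesis by (rule T_ge[OF G e])
  qed
qed

lemma M3upper: assumes G: "G n c" and c: "0 < c" and e: "0 < e"
  and ct: "0 < ct" "ct \<le> c" "ct \<le> e\<^sup>2 / 3"
  and K: "c * exp (- 2 * K) \<le> e\<^sup>2 / 3" and hK: "K \<le> tau n c * lam n (J n ct)"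
  and x: "1 \<le> sqrt (tau n c * lam n (J n c))"
  and M: "1 \<le> M" "3 * exp (- (2 * M - 1)) \<le> e\<^sup>2 / 3"
  shows "T n e \<le> tau n c + M * sqrt (tau n c * lam n (J n c)) / lam n (J n c)"
proof -
  have G0: "G n c" "0 \<le> c" using G c by auto
  have Gt: "G n ct" "0 \<le> ct" using G_mono[OF G ct(2)] ct by auto
  let ?l = "lam n (J n c)" let ?Jt = "J n ct" let ?J = "J n c" let ?tau = "tau n c"
  define x where "x = sqrt (?tau * ?l)"
  have l: "0 < ?l" using lamJ_pos[OF G0] .
  have lt: "0 < lam n ?Jt" using lamJ_pos[OF Gt] .
  have tp: "0 < ?tau" using tau_pos[OF G0] .
  have x1: "1 \<le> x" using x unfolding x_def .
  have xx: "x * x = ?tau * ?l" unfolding x_def using tp l by simp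
  define s where "s = M * x / ?l"
  have s: "0 < s" unfolding s_def using l M x1 by simp
  define t where "t = ?tau + s"
  have t0: "0 \<le> t" "?tau \<le> t" using tp s unfolding t_def by auto
  have JJ: "1 \<le> ?Jt" "?Jt \<le> ?J" "?J \<le> N n" "1 \<le> ?J"
    using J_props[OF G0] J_props[OF Gt] J_le[OF G Gt(2) ct(2)] by auto
  have split: "D n t = P n 1 ?Jt t + P n ?Jt ?J t + P n ?J (N n) t"
    using D_split[of ?Jt n t] P_split[of ?Jt ?J "N n" n t] JJ by simp
  have h1: "P n 1 ?Jt t \<le> e\<^sup>2 / 3"
  proof -
    have "P n 1 ?Jt t \<le> A n (?Jt - 1)" using head_le JJ t0 by auto
    also have "\<dots> \<le> ct" using J_below[OF Gt] JJ by simp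
    finally show ?thesis using ct by simp
  qed
  have h2: "P n ?Jt ?J t \<le> e\<^sup>2 / 3"
  proof -
    have "P n ?Jt ?J t \<le> A n (?J - 1) * exp (- 2 * lam n ?Jt * t)" using mid_le JJ t0 by auto
    also have "\<dots> \<le> c * exp (- 2 * K)"
    proof (rule mult_mono)
      show "A n (?J - 1) \<le> c" using J_below[OF G0] JJ by simp
      have "K \<le> lam n ?Jt * ?tau" using hK by (simp add: mult_ac)
      also have "\<dots> \<le> lam n ?Jt * t" using lt t0 by (simp add: mult_left_mono)
      finally show "exp (- 2 * lam n ?Jt * t) \<le> exp (- 2 * K)" by simp
    qed (use c in auto)
    also have "\<dots> \<le> e\<^sup>2 / 3" using K .
    finally show ?thesis .
  qed
  have h3: "P n ?J (N n) t \<le> e\<^sup>2 / 3"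
  proof -
    have "P n ?J (N n) t \<le> (1 + t / (t - ?tau)) * exp (- 2 * ?l * (t - ?tau))"
      using tail[OF G0, of t] s unfolding t_def by simp
    also have "t - ?tau = s" unfolding t_def by simp
    also have "1 + t / s = 2 + x / M"
    proof -
      have "t / s = 1 + ?tau / s" unfolding t_def using s by (simp add: field_simps)
      also have "?tau / s = (x * x) / (M * x)" unfolding s_def using l by (simp add: xx[symmetric] field_simps) 
      also have "\<dots> = x / M" using x1 by simp
      finally show ?thesis by simp
    qed
    also have "?l * s = M * x" unfolding s_def using l by simp
    hence "exp (- 2 * ?l * s) = exp (- 2 * (M * x))" by (simp add: mult.assoc)
    also have "(2 + x / M) * exp (- 2 * (M * x)) \<le> (3 * x) * exp (- 2 * (M * x))"
    proof (rule mult_right_mono)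
      have "x / M \<le> x" using x1 M by (simp add: divide_le_eq mult_le_cancel_left1)
      thus "2 + x / M \<le> 3 * x" using x1 by linarith
    qed simp
    also have "\<dots> \<le> 3 * exp (- (2 * M - 1))"
    proof -
      have "x \<le> exp x" using exp_ge_add_one_self[of x] by linarith
      hence "x * exp (- 2 * (M * x)) \<le> exp x * exp (- 2 * (M * x))" by (simp add: mult_right_mono)
      also have "\<dots> = exp (- ((2 * M - 1) * x))" by (simp add: exp_add[symmetric] algebra_simps)
      also have "\<dots> \<le> exp (- (2 * M - 1))"
      proof -
        have "(2 * M - 1) * 1 \<le> (2 * M - 1) * x" using M x1 by (intro mult_left_mono) auto
        thus ?thesis by simp
      qed
      finally show ?thesis by simp
    qed
    also have "\<dots> \<le> e\<^sup>2 / 3" using M by simp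
    finally show ?thesis .
  qed
  have "D n t \<le> e\<^sup>2" using split h1 h2 h3 by linarith
  hence "T n e \<le> t" using T_le[OF e t0(1)] by simp
  thus ?thesis unfolding t_def s_def x_def .
qed

lemma sqrt_div: fixes u l :: real assumes "0 < u" "0 < l" shows "sqrt (u * l) / l = sqrt (u / l)"
proof -
  have "u / l = (u * l) / l\<^sup>2" using assms by (simp add: power2_eq_square)
  hence "sqrt (u / l) = sqrt (u * l) / sqrt (l\<^sup>2)" by (simp add: real_sqrt_divide)
  thus ?thesis using assms by simp
qed

lemma M3: assumes C5: "C5" and e: "0 < e" and c: "0 < c"
  shows "(\<lambda>n. \<bar>T n e - tau n c\<bar>) \<in> O(\<lambda>n. sqrt (tau n c / lam n (J n c)))"
proof -
  define ct where "ct = min c (e\<^sup>2 / 3)"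
  have ct: "0 < ct" "ct \<le> c" "ct \<le> e\<^sup>2 / 3" using c e unfolding ct_def by auto
  obtain K where K: "1 \<le> K" "c * exp (- 2 * K) \<le> e\<^sup>2 / 3" using ex_M[of c "e\<^sup>2/3"] c e by auto
  obtain M where M: "1 \<le> M" "(3 * exp 1) * exp (- 2 * M) \<le> e\<^sup>2 / 3" using ex_M[of "3 * exp 1" "e\<^sup>2/3"] e by auto
  have M': "3 * exp (- (2 * M - 1)) \<le> e\<^sup>2 / 3"
  proof -
    have "exp (- (2 * M - 1)) = exp 1 * exp (- 2 * M)" by (simp add: exp_add[symmetric])
    thus ?thesis using M by (simp add: mult_ac)
  qed
  have e1: "\<forall>\<^sub>F n in sequentially. K \<le> tau n c * lam n (J n ct)"
    using C5 c ct unfolding C5_def filterlim_at_top by blast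
  have e2: "\<forall>\<^sub>F n in sequentially. 1 \<le> tau n c * lam n (J n c)"
    using C5 c unfolding C5_def filterlim_at_top by blast
  show ?thesis
  proof (rule bigoI)
    show "\<forall>\<^sub>F n in sequentially. norm \<bar>T n e - tau n c\<bar> \<le> max (e\<^sup>2) M * norm (sqrt (tau n c / lam n (J n c)))"
      using e1 e2 evG[of c]
    proof eventually_elim
      case (elim n)
      have G: "G n c" "0 \<le> c" using elim c by auto
      let ?l = "lam n (J n c)" let ?tau = "tau n c"
      have l: "0 < ?l" using lamJ_pos[OF G] .
      have tp: "0 < ?tau" using tau_pos[OF G] .
      define x where "x = sqrt (?tau * ?l)"
      have x1: "1 \<le> x" unfolding x_def using elim by simp
      have xs: "x / ?l = sqrt (?tau / ?l)" unfolding x_def using sqrt_div[OF tp l] .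
      have up: "T n e \<le> ?tau + M * x / ?l"
        unfolding x_def by (rule M3upper[OF G(1) c e ct K(2) _ _ M(1) M']) (use elim x1 x_def in auto)
      have lo: "?tau - e\<^sup>2 / ?l \<le> T n e" using M3lower[OF G e] .
      have "e\<^sup>2 / ?l \<le> e\<^sup>2 * x / ?l" using x1 l e by (simp add: divide_right_mono mult_le_cancel_left1)
      hence lo': "?tau - max (e\<^sup>2) M * (x / ?l) \<le> T n e"
        using lo l x1 by (smt (verit) divide_nonneg_pos max.cobounded1 mult_right_mono times_divide_eq_right)
      have up': "T n e \<le> ?tau + max (e\<^sup>2) M * (x / ?l)"
        using up l x1 by (smt (verit) divide_nonneg_pos max.cobounded2 mult_right_mono times_divide_eq_right)
      have "\<bar>T n e - ?tau\<bar> \<le> max (e\<^sup>2) M * (x / ?l)" using lo' up' by linarith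
      moreover have "0 \<le> sqrt (?tau / ?l)" using tp l by simp
      ultimately show ?case unfolding xs by simp
    qed
  qed
qed

end

theorem theorem3p2:
  fixes S :: "nat \<Rightarrow> 'a set" and L :: "nat \<Rightarrow> 'a \<Rightarrow> 'a \<Rightarrow> real"
    and pd mu :: "nat \<Rightarrow> 'a \<Rightarrow> real"
    and lam :: "nat \<Rightarrow> nat \<Rightarrow> real" and phi :: "nat \<Rightarrow> nat \<Rightarrow> 'a \<Rightarrow> real"
  assumes fin: "\<And>n. finite (S n) \<and> S n \<noteq> {}"
    and gen: "\<And>n. is_generator (S n) (L n)"
    and irr: "\<And>n. irreducible_chain (S n) (L n)"
    and stat: "\<And>n. stationary_positive (S n) (L n) (pd n)"
    and rev: "\<And>n. reversible_chain (S n) (L n) (pd n)"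
    and init: "\<And>n. prob_distr (S n) (mu n)"
    and spec: "\<And>n. spectral_data (S n) (L n) (pd n) (lam n) (phi n)"
    and chi: "filterlim (\<lambda>n. chi2 (S n) (pd n) (mu n)) at_top sequentially"
  shows
   "(has_L2_cutoff S L pd mu \<longleftrightarrow>
       (\<forall>\<epsilon>>0. \<forall>c>0. filterlim (\<lambda>n. T2 (S n) (L n) (pd n) (mu n) \<epsilon>
            * lam n (jfun (S n) (mu n) (phi n) c)) at_top sequentially)) \<and>
    (has_L2_cutoff S L pd mu \<longleftrightarrow>
       (\<exists>\<epsilon>>0. \<forall>c>0. filterlim (\<lambda>n. T2 (S n) (L n) (pd n) (mu n) \<epsilon>
            * lam n (jfun (S n) (mu n) (phi n) c)) at_top sequentially)) \<and>
    (has_L2_cutoff S L pd mu \<longleftrightarrow>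
       (\<forall>c>0. filterlim (\<lambda>n. taufun (S n) (mu n) (lam n) (phi n) c
            * lam n (jfun (S n) (mu n) (phi n) c)) at_top sequentially)) \<and>
    (has_L2_cutoff S L pd mu \<longleftrightarrow>
       (\<forall>c'>0. \<forall>c>0. filterlim (\<lambda>n. taufun (S n) (mu n) (lam n) (phi n) c'
            * lam n (jfun (S n) (mu n) (phi n) c)) at_top sequentially)) \<and>
    (has_L2_cutoff S L pd mu \<longleftrightarrow>
       (\<exists>c'>0. \<forall>c>0. filterlim (\<lambda>n. taufun (S n) (mu n) (lam n) (phi n) c'
            * lam n (jfun (S n) (mu n) (phi n) c)) at_top sequentially)) \<and>
    (has_L2_cutoff S L pd mu \<longrightarrow>
       (\<forall>c>0. L2_cutoff_time S L pd mu (\<lambda>n. taufun (S n) (mu n) (lam n) (phi n) c)) \<and>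
       (\<forall>\<epsilon>>0. \<forall>\<delta>>0. \<forall>c>0.
          (\<lambda>n. \<bar>T2 (S n) (L n) (pd n) (mu n) \<epsilon> - T2 (S n) (L n) (pd n) (mu n) \<delta>\<bar>)
            \<in> O(\<lambda>n. 1 / lam n (jfun (S n) (mu n) (phi n) c))) \<and>
       (\<forall>\<epsilon>>0. \<forall>c>0.
          (\<lambda>n. \<bar>T2 (S n) (L n) (pd n) (mu n) \<epsilon> - taufun (S n) (mu n) (lam n) (phi n) c\<bar>)
            \<in> O(\<lambda>n. sqrt (taufun (S n) (mu n) (lam n) (phi n) c
                           / lam n (jfun (S n) (mu n) (phi n) c)))))"
  proof -
  define N where "N n = card (S n)" for n
  define a where "a n i = \<bar>mu_of (S n) (mu n) (phi n i)\<bar>\<^sup>2" for n i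
  have ch: "\<And>n. chain (S n) (L n) (pd n) (mu n) (lam n) (phi n)"
    using fin stat rev init spec by unfold_locales auto
  have cardpos: "\<And>n. 0 < N n" unfolding N_def using chain.cardpos[OF ch] by blast
  have lam_pos: "0 < lam n i" if "1 \<le> i" "i < N n" for n i
  proof -
    have sd: "spectral_data (S n) (L n) (pd n) (lam n) (phi n)" using spec .
    have "0 < lam n 1" using sd that unfolding spectral_data_def N_def by auto
    moreover have "lam n 1 \<le> lam n i" using sd that unfolding spectral_data_def N_def by auto
    ultimately show ?thesis by linarith
  qed
  have lam_mono: "lam n i \<le> lam n j" if "1 \<le> i" "i \<le> j" "j < N n" for n i j
    using spec[of n] that unfolding spectral_data_def N_def by auto
  have sumeq: "\<And>n. (\<Sum>i = 1..N n - 1. a n i) = chi2 (S n) (pd n) (mu n) - 1"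
  proof -
    fix n
    have "{1..N n - 1} = {1..<N n}" using cardpos[of n] by auto
    thus "(\<Sum>i = 1..N n - 1. a n i) = chi2 (S n) (pd n) (mu n) - 1"
      using chain.chi2_eq'[OF ch] unfolding a_def N_def by simp
  qed
  have big: "filterlim (\<lambda>n. \<Sum>i = 1..N n - 1. a n i) at_top sequentially"
  proof -
    have "filterlim (\<lambda>n. -1 + chi2 (S n) (pd n) (mu n)) at_top sequentially"
      by (rule filterlim_tendsto_add_at_top[OF tendsto_const chi])
    thus ?thesis unfolding sumeq by simp
  qed
  interpret F: fam N a lam
    apply unfold_locales
    subgoal by (simp add: a_def)
    subgoal using lam_pos by blast
    subgoal using lam_mono by blast
    subgoal using big by blast
    done
  have d2E: "\<And>n t. d2 (S n) (L n) (pd n) (mu n) t = sqrt (F.D n t)"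
    unfolding F.D_def a_def N_def using chain.d2_eq'[OF ch] by simp
  have T2E: "\<And>n e. T2 (S n) (L n) (pd n) (mu n) e = F.T n e"
    unfolding T2_def F.T_def d2E by simp
  have psumE: "\<And>n j. psum (S n) (mu n) (phi n) j = F.A n j"
    unfolding psum_def F.A_def a_def by simp
  have jE: "\<And>n c. jfun (S n) (mu n) (phi n) c = F.J n c"
    unfolding jfun_def F.J_def psumE N_def by simp
  have tauE: "\<And>n c. taufun (S n) (mu n) (lam n) (phi n) c = F.tau n c"
    unfolding taufun_def F.tau_def psumE jE N_def by simp
  have LCE: "\<And>t. L2_cutoff_time S L pd mu t = F.cutD t"
    unfolding L2_cutoff_time_def F.cutD_def d2E
    using F.sqrt_tendsto0[OF F.D_nn] F.sqrt_attop[OF F.D_nn] by simp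
  have HCE: "has_L2_cutoff S L pd mu = (\<exists>t. F.cutD t)"
    unfolding has_L2_cutoff_def LCE ..
  have e2: "(\<exists>t. F.cutD t) \<longleftrightarrow> F.C2"
    using F.cut_C2 F.C2_C3 F.C3_C4 F.C4_C5 F.C5_cut[of 1] by auto
  have e3: "(\<exists>t. F.cutD t) \<longleftrightarrow> F.C3"
    using F.cut_C2 F.C2_C3 F.C3_C4 F.C4_C5 F.C5_cut[of 1] by auto
  have e4: "(\<exists>t. F.cutD t) \<longleftrightarrow> F.C4"
    using F.cut_C2 F.C2_C3 F.C3_C4 F.C4_C5 F.C5_cut[of 1] by auto
  have e5: "(\<exists>t. F.cutD t) \<longleftrightarrow> F.C5"
    using F.cut_C2 F.C2_C3 F.C3_C4 F.C4_C5 F.C5_cut[of 1] by auto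
  have e6: "(\<exists>t. F.cutD t) \<longleftrightarrow> F.C6"
    using F.cut_C2 F.C2_C3 F.C3_C4 F.C4_C5 F.C5_cut[of 1] F.C5_C6 F.C6_C4 by auto
  have mo: "(\<exists>t. F.cutD t) \<longrightarrow>
       (\<forall>c>0. F.cutD (\<lambda>n. F.tau n c)) \<and>
       (\<forall>e>0. \<forall>d>0. \<forall>c>0. (\<lambda>n. \<bar>F.T n e - F.T n d\<bar>) \<in> O(\<lambda>n. 1 / lam n (F.J n c))) \<and>
       (\<forall>e>0. \<forall>c>0. (\<lambda>n. \<bar>F.T n e - F.tau n c\<bar>) \<in> O(\<lambda>n. sqrt (F.tau n c / lam n (F.J n c))))"
  proof
    assume "\<exists>t. F.cutD t"
    hence C2: F.C2 and C5: F.C5 using e2 e5 by auto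
    show "(\<forall>c>0. F.cutD (\<lambda>n. F.tau n c)) \<and>
       (\<forall>e>0. \<forall>d>0. \<forall>c>0. (\<lambda>n. \<bar>F.T n e - F.T n d\<bar>) \<in> O(\<lambda>n. 1 / lam n (F.J n c))) \<and>
       (\<forall>e>0. \<forall>c>0. (\<lambda>n. \<bar>F.T n e - F.tau n c\<bar>) \<in> O(\<lambda>n. sqrt (F.tau n c / lam n (F.J n c))))"
      using F.C5_cut[OF C5] F.M2[OF C2] F.M3[OF C5] by blast
  qed
  note e2' = e2[unfolded F.C2_def]
  note e3' = e3[unfolded F.C3_def]
  note e4' = e4[unfolded F.C4_def]
  note e5' = e5[unfolded F.C5_def]
  note e6' = e6[unfolded F.C6_def]
  show ?thesis
    unfolding HCE T2E jE tauE LCE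
    apply (intro conjI)
         apply (fact e2')
        apply (fact e3')
       apply (fact e4')
      apply (fact e5')
     apply (fact e6')
    apply (fact mo)
    done
qed

end
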